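(* Fix $\lambda>0$. For every finite graph $G$ of maximum degree at most $\Delta$, every vertex $v$ and every $\epsilon>0$, the algorithm Approx-Marginal$(\lambda,\epsilon,v)$ outputs an estimate $\widehat{p}$ with $|\widehat{p}-p_{G,\lambda}(v)|<\epsilon$ and $|\log \widehat{p}-\log p_{G,\lambda}(v)|<\epsilon$. Its query complexity is at most $\overline{\mathcal{Q}}(\epsilon,\Delta)=\tilde{O}\left((1/\epsilon)^{\tilde{O}(\sqrt{\Delta})}\right)$, and $Q=\overline{\mathcal{Q}}(\epsilon,\Delta)$ satisfies $$\lim_{\Delta\to \infty}\frac{1}{\sqrt{\Delta}\log\Delta} \lim_{\epsilon\to 0}\frac{\log Q}{\log (1/\epsilon)} = \sqrt{\lambda}.$$
   Context: Let $G=(V,E)$ be a finite undirected graph (parallel edges and self-loops allowed), matchings $\mathbb{M}$, $Z(G,\lambda)=\sum_{M\in\mathbb{M}}\lambda^{|M|}$, Gibbs distribution $\pi_{G,\lambda}(M)=\lambda^{|M|}/Z(G,\lambda)$, and $p_{G,\lambda}(v)$ the $\pi_{G,\lambda}$-probability that $v$ is not covered by the matching. The graph is accessed only through oracles: $\mathcal{D}(u)$ returns the degree of $u$, and $\mathcal{N}(u,i)$ returns the $i$-th neighbor of $u$ ($1\le i\le\mathcal{D}(u)$); query complexity is the number of oracle calls. The path-tree $T_G(v)$ has as nodes the simple paths starting at $v$, a path $v_0\dots v_k$ being the parent of $v_0\dots v_kv_{k+1}$; $T^h_G(v)$ is its truncation at depth $h$, and $x^h_v(v)$ is the root value of the solution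 of $x_u=(1+\lambda\sum_{w\text{ child of }u}x_w)^{-1}$ on $T^h_G(v)$ (empty sum $=0$). Algorithm Approx-Marginal$(\lambda,\epsilon,v)$: compute $x^1_v(v),x^2_v(v),\dots$, each by a depth-first exploration of $T^h_G(v)$ using the oracles, and stop at the first $h\ge2$ with $|\log x^h_v(v)-\log x^{h-1}_v(v)|\leq\epsilon/e$; output $\widehat p=x^h_v(v)$. $\tilde{O}$ hides polylogarithmic factors; limits in $\epsilon$ are taken first with $\Delta$ fixed. *)

theory Defs
  imports "HOL-Analysis.Analysis" "HOL-Library.Multiset"
begin

text \<open>A graph is a finite vertex set V, a finite set E of edge identifiers and an
  endpoint map ends; edge e joins fst (ends e) and snd (ends e) (orientation irrelevant);
  a self-loop has equal endpoints.\<close>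

definition graph :: "'v set \<Rightarrow> 'e set \<Rightarrow> ('e \<Rightarrow> 'v \<times> 'v) \<Rightarrow> bool" where
  "graph V E ends \<longleftrightarrow> finite V \<and> finite E \<and>
     (\<forall>e\<in>E. fst (ends e) \<in> V \<and> snd (ends e) \<in> V)"

definition endpoints :: "('e \<Rightarrow> 'v \<times> 'v) \<Rightarrow> 'e \<Rightarrow> 'v set" where
  "endpoints ends e = {fst (ends e), snd (ends e)}"

definition is_matching :: "'e set \<Rightarrow> ('e \<Rightarrow> 'v \<times> 'v) \<Rightarrow> 'e set \<Rightarrow> bool" where
  "is_matching E ends M \<longleftrightarrow> M \<subseteq> E \<and>
     (\<forall>e\<in>M. fst (ends e) \<noteq> snd (ends e)) \<and>
     (\<forall>e\<in>M. \<forall>f\<in>M. e \<noteq> f \<longrightarrow> endpoints ends e \<inter> endpoints ends f = {})"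

definition matchings :: "'e set \<Rightarrow> ('e \<Rightarrow> 'v \<times> 'v) \<Rightarrow> 'e set set" where
  "matchings E ends = {M. is_matching E ends M}"

definition partition_fn :: "'e set \<Rightarrow> ('e \<Rightarrow> 'v \<times> 'v) \<Rightarrow> real \<Rightarrow> real" where
  "partition_fn E ends lam = (\<Sum>M\<in>matchings E ends. lam ^ card M)"

definition covered :: "('e \<Rightarrow> 'v \<times> 'v) \<Rightarrow> 'e set \<Rightarrow> 'v \<Rightarrow> bool" where
  "covered ends M v \<longleftrightarrow> (\<exists>e\<in>M. v \<in> endpoints ends e)"

definition p_marg :: "'e set \<Rightarrow> ('e \<Rightarrow> 'v \<times> 'v) \<Rightarrow> real \<Rightarrow> 'v \<Rightarrow> real" where
  "p_marg E ends lam v =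
     (\<Sum>M\<in>{M\<in>matchings E ends. \<not> covered ends M v}. lam ^ card M) / partition_fn E ends lam"

text \<open>D u is the degree oracle, N u i the i-th neighbour oracle (1 \<le> i \<le> D u).
  They represent the graph if, for every vertex u, the neighbour list
  N u 1, ..., N u (D u) contains, as a multiset, the other endpoint of every
  incident edge; a self-loop at u contributes u twice (standard degree convention).\<close>

definition oracle_rep :: "'v set \<Rightarrow> 'e set \<Rightarrow> ('e \<Rightarrow> 'v \<times> 'v) \<Rightarrow> ('v \<Rightarrow> nat) \<Rightarrow> ('v \<Rightarrow> nat \<Rightarrow> 'v) \<Rightarrow> bool" where
  "oracle_rep V E ends D N \<longleftrightarrow>
     (\<forall>u\<in>V. mset (map (N u) [1..<Suc (D u)]) =
        (\<Sum>e\<in>E. (if fst (ends e) = u then {#snd (ends e)#} else {#}) +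
                 (if snd (ends e) = u then {#fst (ends e)#} else {#})))"

text \<open>xval lam D N r ps is the value x_u at the path-tree node ps (a simple path,
  listed from the root v to its endpoint u = last ps), in the tree truncated so that
  r further levels remain below this node. Children are indexed by neighbour slots
  i = 1..D u (so parallel edges give distinct children), and exist iff N u i is not
  on the path. Hence x^h_v(v) = xval lam D N h [v].\<close>

fun xval :: "real \<Rightarrow> ('v \<Rightarrow> nat) \<Rightarrow> ('v \<Rightarrow> nat \<Rightarrow> 'v) \<Rightarrow> nat \<Rightarrow> 'v list \<Rightarrow> real" where
  "xval lam D N 0 ps = 1"
| "xval lam D N (Suc r) ps =
     1 / (1 + lam * (\<Sum>i\<in>{1..D (last ps)}.
            if N (last ps) i \<notin> set ps then xval lam D N r (ps @ [N (last ps) i]) else 0))"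

text \<open>Number of oracle calls made by the depth-first exploration computing xval:
  at an internal node one call D(u), then for each slot i one call N(u,i), and a
  recursive exploration of the child if it is a new vertex.\<close>

fun dfs_queries :: "('v \<Rightarrow> nat) \<Rightarrow> ('v \<Rightarrow> nat \<Rightarrow> 'v) \<Rightarrow> nat \<Rightarrow> 'v list \<Rightarrow> nat" where
  "dfs_queries D N 0 ps = 0"
| "dfs_queries D N (Suc r) ps =
     1 + (\<Sum>i\<in>{1..D (last ps)}. 1 +
            (if N (last ps) i \<notin> set ps then dfs_queries D N r (ps @ [N (last ps) i]) else 0))"

definition am_stop :: "real \<Rightarrow> real \<Rightarrow> ('v \<Rightarrow> nat) \<Rightarrow> ('v \<Rightarrow> nat \<Rightarrow> 'v) \<Rightarrow> 'v \<Rightarrow> nat" where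
  "am_stop lam eps D N v =
     (LEAST h. 2 \<le> h \<and>
        \<bar>ln (xval lam D N h [v]) - ln (xval lam D N (h - 1) [v])\<bar> \<le> eps / exp 1)"

definition approx_marginal :: "real \<Rightarrow> real \<Rightarrow> ('v \<Rightarrow> nat) \<Rightarrow> ('v \<Rightarrow> nat \<Rightarrow> 'v) \<Rightarrow> 'v \<Rightarrow> real" where
  "approx_marginal lam eps D N v = xval lam D N (am_stop lam eps D N v) [v]"

text \<open>Total query complexity: x^1, ..., x^H are each computed by a fresh DFS.\<close>

definition am_queries :: "real \<Rightarrow> real \<Rightarrow> ('v \<Rightarrow> nat) \<Rightarrow> ('v \<Rightarrow> nat \<Rightarrow> 'v) \<Rightarrow> 'v \<Rightarrow> nat" where
  "am_queries lam eps D N v = (\<Sum>h\<in>{1..am_stop lam eps D N v}. dfs_queries D N h [v])"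

end

theory Submission
  imports Defs "HOL-Real_Asymp.Real_Asymp"
begin

definition Eav :: "'e set \<Rightarrow> ('e \<Rightarrow> 'v \<times> 'v) \<Rightarrow> 'v set \<Rightarrow> 'e set" where
  "Eav F ends S = {e\<in>F. endpoints ends e \<inter> S = {}}"

definition oth :: "('e \<Rightarrow> 'v \<times> 'v) \<Rightarrow> 'v \<Rightarrow> 'e \<Rightarrow> 'v" where
  "oth ends u e = (if fst (ends e) = u then snd (ends e) else fst (ends e))"

definition Fat :: "'e set \<Rightarrow> ('e \<Rightarrow> 'v \<times> 'v) \<Rightarrow> 'v \<Rightarrow> 'e set" where
  "Fat F ends u = {e\<in>F. u \<in> endpoints ends e \<and> fst (ends e) \<noteq> snd (ends e)}"

lemma matchings_subset: "matchings F ends \<subseteq> Pow F"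
  by (auto simp: matchings_def is_matching_def)

lemma finite_matchings: "finite F \<Longrightarrow> finite (matchings F ends)"
  using matchings_subset by (metis finite_Pow_iff rev_finite_subset)

lemma empty_matching: "{} \<in> matchings F ends"
  by (simp add: matchings_def is_matching_def)

lemma Z_pos: assumes "finite F" "lam > 0" shows "partition_fn F ends lam > 0"
proof -
  have "partition_fn F ends lam \<ge> lam ^ card ({}::'a set)"
    unfolding partition_fn_def
    by (rule member_le_sum) (use assms finite_matchings empty_matching in auto)
  then show ?thesis by simp
qed

lemma Z_nonneg: assumes "lam > 0" shows "partition_fn F ends lam \<ge> 0"
  unfolding partition_fn_def using assms by (intro sum_nonneg) simp

lemma uncovered_eq: "{M\<in>matchings F ends. \<not> covered ends M u} = matchings (Eav F ends {u}) ends"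
  by (auto simp: matchings_def is_matching_def covered_def Eav_def)

lemma Eav_Eav: "Eav (Eav F ends S) ends T = Eav F ends (S \<union> T)"
  by (auto simp: Eav_def)

lemma Eav_finite: "finite F \<Longrightarrow> finite (Eav F ends S)"
  by (simp add: Eav_def)

lemma decomp:
  assumes fin: "finite F"
  shows "partition_fn F ends lam = partition_fn (Eav F ends {u}) ends lam
     + lam * (\<Sum>e\<in>Fat F ends u. partition_fn (Eav F ends {u, oth ends u e}) ends lam)"
proof -
  let ?A = "{M\<in>matchings F ends. \<not> covered ends M u}"
  let ?B = "{M\<in>matchings F ends. covered ends M u}"
  let ?Be = "\<lambda>e. {M\<in>matchings F ends. e \<in> M}"
  have finM: "finite (matchings F ends)" using fin finite_matchings by blast
  have split: "partition_fn F ends lam = (\<Sum>M\<in>?A. lam ^ card M) + (\<Sum>M\<in>?B. lam ^ card M)"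
  proof -
    have "matchings F ends = ?A \<union> ?B" by auto
    then have "partition_fn F ends lam = (\<Sum>M\<in>?A \<union> ?B. lam ^ card M)"
      unfolding partition_fn_def by simp
    also have "\<dots> = (\<Sum>M\<in>?A. lam ^ card M) + (\<Sum>M\<in>?B. lam ^ card M)"
      by (rule sum.union_disjoint) (use finM in auto)
    finally show ?thesis .
  qed
  have Bun: "?B = (\<Union>e\<in>Fat F ends u. ?Be e)"
    by (auto simp: matchings_def is_matching_def covered_def Fat_def)
  have disj: "\<forall>e\<in>Fat F ends u. \<forall>f\<in>Fat F ends u. e \<noteq> f \<longrightarrow> ?Be e \<inter> ?Be f = {}"
    by (auto simp: matchings_def is_matching_def Fat_def) blast
  have finFat: "finite (Fat F ends u)" using fin by (simp add: Fat_def)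
  have each: "(\<Sum>M\<in>?Be e. lam ^ card M) = lam * partition_fn (Eav F ends {u, oth ends u e}) ends lam"
    if e: "e \<in> Fat F ends u" for e
  proof -
    let ?w = "oth ends u e"
    have eF: "e \<in> F" and ue: "u \<in> endpoints ends e" and nl: "fst (ends e) \<noteq> snd (ends e)"
      using e by (auto simp: Fat_def)
    have ep: "endpoints ends e = {u, ?w}" using ue by (auto simp: endpoints_def oth_def)
    let ?G = "Eav F ends {u, ?w}"
    have finG: "finite ?G" using fin by (simp add: Eav_def)
    have eG: "e \<notin> ?G" using ep by (auto simp: Eav_def)
    have bij: "bij_betw (insert e) (matchings ?G ends) (?Be e)"
    proof (rule bij_betw_imageI)
      show "inj_on (insert e) (matchings ?G ends)"
      proof (rule inj_onI)
        fix x y assume "x \<in> matchings ?G ends" "y \<in> matchings ?G ends" "insert e x = insert e y"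
        moreover have "e \<notin> x" "e \<notin> y" using calculation eG by (auto simp: matchings_def is_matching_def)
        ultimately show "x = y" by (simp add: insert_ident)
      qed
      show "insert e ` matchings ?G ends = ?Be e"
      proof
        show "insert e ` matchings ?G ends \<subseteq> ?Be e"
        proof
          fix X assume "X \<in> insert e ` matchings ?G ends"
          then obtain M' where X: "X = insert e M'" and M': "M' \<in> matchings ?G ends" by blast
          have sub: "M' \<subseteq> ?G" and nl': "\<forall>f\<in>M'. fst (ends f) \<noteq> snd (ends f)"
            and dj: "\<forall>f\<in>M'. \<forall>g\<in>M'. f \<noteq> g \<longrightarrow> endpoints ends f \<inter> endpoints ends g = {}"
            using M' by (auto simp: matchings_def is_matching_def)
          have av: "\<forall>f\<in>M'. endpoints ends f \<inter> endpoints ends e = {}"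
            using sub ep by (auto simp: Eav_def)
          have "is_matching F ends X"
            unfolding is_matching_def X
          proof (intro conjI)
            show "insert e M' \<subseteq> F" using sub eF by (auto simp: Eav_def)
            show "\<forall>f\<in>insert e M'. fst (ends f) \<noteq> snd (ends f)" using nl nl' by auto
            show "\<forall>f\<in>insert e M'. \<forall>g\<in>insert e M'. f \<noteq> g \<longrightarrow> endpoints ends f \<inter> endpoints ends g = {}"
              using dj av by (auto simp: Int_commute)
          qed
          then show "X \<in> ?Be e" using X by (simp add: matchings_def)
        qed
        show "?Be e \<subseteq> insert e ` matchings ?G ends"
        proof
          fix M assume M: "M \<in> ?Be e"
          have "M - {e} \<in> matchings ?G ends"
            using M ep by (auto simp: matchings_def is_matching_def Eav_def)
          moreover have "M = insert e (M - {e})" using M by auto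
          ultimately show "M \<in> insert e ` matchings ?G ends" by blast
        qed
      qed
    qed
    have "(\<Sum>M\<in>?Be e. lam ^ card M) = (\<Sum>M\<in>matchings ?G ends. lam ^ card (insert e M))"
      using sum.reindex_bij_betw[OF bij, of "\<lambda>M. lam ^ card M"] by simp
    also have "\<dots> = (\<Sum>M\<in>matchings ?G ends. lam * lam ^ card M)"
    proof (rule sum.cong)
      fix M assume "M \<in> matchings ?G ends"
      then have "M \<subseteq> ?G" using matchings_subset by blast
      then have "finite M" "e \<notin> M" using finG eG
        by (auto intro: rev_finite_subset)
      then show "lam ^ card (insert e M) = lam * lam ^ card M" by simp
    qed simp
    also have "\<dots> = lam * partition_fn ?G ends lam"
      by (simp add: partition_fn_def sum_distrib_left)
    finally show ?thesis .
  qed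
  have "(\<Sum>M\<in>?B. lam ^ card M) = (\<Sum>e\<in>Fat F ends u. \<Sum>M\<in>?Be e. lam ^ card M)"
    unfolding Bun
    by (rule sum.UNION_disjoint) (use finFat finM disj in auto)
  also have "\<dots> = lam * (\<Sum>e\<in>Fat F ends u. partition_fn (Eav F ends {u, oth ends u e}) ends lam)"
    using each by (simp add: sum_distrib_left)
  finally show ?thesis using split
    by (simp add: partition_fn_def uncovered_eq)
qed

lemma frac_aux: fixes Z T lam :: real assumes "Z > 0" "T \<ge> 0" "lam > 0"
  shows "Z / (Z + lam * T) = 1 / (1 + lam * (T / Z))"
proof -
  have "Z + lam * T > 0" using assms by (simp add: add_pos_nonneg)
  then show ?thesis using assms by (simp add: field_simps)
qed

lemma p_rec:
  assumes fin: "finite F" and lam: "lam > 0"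
  shows "p_marg F ends lam u = 1 / (1 + lam * (\<Sum>e\<in>Fat F ends u. p_marg (Eav F ends {u}) ends lam (oth ends u e)))"
proof -
  let ?Z1 = "partition_fn (Eav F ends {u}) ends lam"
  have Z1: "?Z1 > 0" using Z_pos[OF Eav_finite[OF fin] lam] .
  have pw: "p_marg (Eav F ends {u}) ends lam (oth ends u e) = partition_fn (Eav F ends {u, oth ends u e}) ends lam / ?Z1" for e
  proof -
    have "{u} \<union> {oth ends u e} = {u, oth ends u e}" by auto
    then show ?thesis unfolding p_marg_def uncovered_eq Eav_Eav by (simp add: partition_fn_def)
  qed
  have "p_marg F ends lam u = ?Z1 / partition_fn F ends lam"
    unfolding p_marg_def uncovered_eq partition_fn_def by simp
  also have "\<dots> = ?Z1 / (?Z1 + lam * (\<Sum>e\<in>Fat F ends u. partition_fn (Eav F ends {u, oth ends u e}) ends lam))"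
    by (simp only: decomp[OF fin, of ends lam u])
  also have "\<dots> = 1 / (1 + lam * (\<Sum>e\<in>Fat F ends u. partition_fn (Eav F ends {u, oth ends u e}) ends lam / ?Z1))"
  proof -
    let ?T = "(\<Sum>e\<in>Fat F ends u. partition_fn (Eav F ends {u, oth ends u e}) ends lam)"
    have T: "?T \<ge> 0" using Z_nonneg[OF lam] by (intro sum_nonneg) auto
    have "(\<Sum>e\<in>Fat F ends u. partition_fn (Eav F ends {u, oth ends u e}) ends lam / ?Z1) = ?T / ?Z1"
      by (simp add: sum_divide_distrib)
    then show ?thesis using Z1 T lam frac_aux by metis
  qed
  finally show ?thesis by (simp add: pw)
qed


lemma summset_image_sum:
  assumes "finite A"
  shows "sum_mset (image_mset h (\<Sum>e\<in>A. f e)) = (\<Sum>e\<in>A. sum_mset (image_mset h (f e)))"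
  using assms by (induction A rule: finite_induct) auto

fun gval :: "real \<Rightarrow> ('v \<Rightarrow> nat) \<Rightarrow> ('v \<Rightarrow> nat \<Rightarrow> 'v) \<Rightarrow> ('v list \<Rightarrow> real) \<Rightarrow> nat \<Rightarrow> 'v list \<Rightarrow> real" where
  "gval lam D N L 0 ps = L ps"
| "gval lam D N L (Suc r) ps =
     1 / (1 + lam * (\<Sum>i\<in>{1..D (last ps)}.
            if N (last ps) i \<notin> set ps then gval lam D N L r (ps @ [N (last ps) i]) else 0))"

lemma xval_gval1: "xval lam D N r ps = gval lam D N (\<lambda>_. 1) r ps"
  by (induction r arbitrary: ps) (simp_all only: xval.simps gval.simps)

lemma xval_gval0: "xval lam D N r ps = gval lam D N (\<lambda>_. 0) (Suc r) ps"
proof (induction r arbitrary: ps)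
  case 0
  have "(\<Sum>i\<in>{1..D (last ps)}. if N (last ps) i \<notin> set ps then gval lam D N (\<lambda>_. 0) 0 (ps @ [N (last ps) i]) else 0) = 0"
    by (intro sum.neutral) simp
  then show ?case by (simp only: xval.simps gval.simps) simp
next
  case (Suc r)
  show ?case by (simp only: xval.simps gval.simps Suc.IH)
qed

lemma inv_bounds: fixes lam s :: real assumes "lam > 0" "s \<ge> 0"
  shows "0 < 1 / (1 + lam * s)" "1 / (1 + lam * s) \<le> 1"
  using assms by (auto simp: field_simps add_pos_nonneg)

lemma gval_range:
  assumes lam: "lam > 0" and L: "\<And>ps. 0 \<le> L ps \<and> L ps \<le> 1"
  shows "0 \<le> gval lam D N L r ps \<and> gval lam D N L r ps \<le> 1 \<and> (r > 0 \<longrightarrow> gval lam D N L r ps > 0)"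
proof (induction r arbitrary: ps)
  case 0 then show ?case using L by simp
next
  case (Suc r)
  let ?s = "(\<Sum>i\<in>{1..D (last ps)}. if N (last ps) i \<notin> set ps then gval lam D N L r (ps @ [N (last ps) i]) else 0)"
  have "?s \<ge> 0" using Suc.IH by (intro sum_nonneg) auto
  then show ?case using inv_bounds[OF lam, of ?s] by simp
qed

lemma gval_pos:
  assumes lam: "lam > 0" and L: "\<And>ps. 0 < L ps \<and> L ps \<le> 1"
  shows "gval lam D N L r ps > 0"
  using gval_range[where L=L and r=r and ps=ps and D=D and N=N, OF lam] L by (cases r) (auto simp: less_imp_le)

lemma gval_mono:
  assumes lam: "lam > 0" and L1: "\<And>ps. 0 \<le> L1 ps \<and> L1 ps \<le> 1" and L2: "\<And>ps. 0 \<le> L2 ps \<and> L2 ps \<le> 1"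
    and le: "\<And>ps. L1 ps \<le> L2 ps"
  shows "(even r \<longrightarrow> gval lam D N L1 r ps \<le> gval lam D N L2 r ps) \<and>
         (odd r \<longrightarrow> gval lam D N L2 r ps \<le> gval lam D N L1 r ps)"
proof (induction r arbitrary: ps)
  case 0 then show ?case using le by simp
next
  case (Suc r)
  let ?s = "\<lambda>L. (\<Sum>i\<in>{1..D (last ps)}. if N (last ps) i \<notin> set ps then gval lam D N L r (ps @ [N (last ps) i]) else 0)"
  have s1: "?s L1 \<ge> 0" using gval_range[where L=L1, OF lam L1] by (intro sum_nonneg) auto
  have s2: "?s L2 \<ge> 0" using gval_range[where L=L2, OF lam L2] by (intro sum_nonneg) auto
  have anti: "1 / (1 + lam * x) \<le> 1 / (1 + lam * y)" if "0 \<le> y" "y \<le> x" for x y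
    using that lam by (intro divide_left_mono) (auto simp: add_pos_nonneg mult_left_mono)
  show ?case
  proof (intro conjI impI)
    assume "even (Suc r)"
    then have "odd r" by simp
    then have "?s L2 \<le> ?s L1" using Suc.IH by (intro sum_mono) auto
    then show "gval lam D N L1 (Suc r) ps \<le> gval lam D N L2 (Suc r) ps"
      using anti[OF s2] by simp
  next
    assume "odd (Suc r)"
    then have "even r" by simp
    then have "?s L1 \<le> ?s L2" using Suc.IH by (intro sum_mono) auto
    then show "gval lam D N L2 (Suc r) ps \<le> gval lam D N L1 (Suc r) ps"
      using anti[OF s1] by simp
  qed
qed

definition Pp :: "'e set \<Rightarrow> ('e \<Rightarrow> 'v \<times> 'v) \<Rightarrow> real \<Rightarrow> 'v list \<Rightarrow> real" where
  "Pp E ends lam ps = p_marg (Eav E ends (set (butlast ps))) ends lam (last ps)"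

lemma Pp_range:
  assumes "finite E" "lam > 0"
  shows "0 < Pp E ends lam ps \<and> Pp E ends lam ps \<le> 1"
proof -
  let ?F = "Eav E ends (set (butlast ps))"
  let ?u = "last ps"
  have fF: "finite ?F" using assms by (simp add: Eav_finite)
  have Z: "partition_fn ?F ends lam > 0" using Z_pos[OF fF assms(2)] .
  have Z1: "partition_fn (Eav ?F ends {?u}) ends lam > 0" using Z_pos[OF Eav_finite[OF fF] assms(2)] .
  have eq: "Pp E ends lam ps = partition_fn (Eav ?F ends {?u}) ends lam / partition_fn ?F ends lam"
    unfolding Pp_def p_marg_def uncovered_eq partition_fn_def by simp
  have "partition_fn (Eav ?F ends {?u}) ends lam \<le> partition_fn ?F ends lam"
    unfolding partition_fn_def uncovered_eq[symmetric]
    by (rule sum_mono2) (use finite_matchings[OF fF] assms(2) in auto)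
  then show ?thesis using eq Z Z1 by simp
qed

lemma last_notin_butlast: assumes "ps \<noteq> []" "distinct ps" shows "last ps \<notin> set (butlast ps)"
proof -
  have "distinct (butlast ps @ [last ps])" using assms by (simp add: append_butlast_last_id)
  then show ?thesis by simp
qed
lemma set_butlast_last: assumes "ps \<noteq> []" shows "set ps = insert (last ps) (set (butlast ps))"
proof -
  have "set ps = set (butlast ps @ [last ps])" using assms by (simp add: append_butlast_last_id)
  then show ?thesis by auto
qed

lemma pointwise:
  assumes e: "e \<in> E" and uS: "u \<notin> S" and setps: "P = insert u S"
  shows "sum_mset (image_mset (\<lambda>w. if w \<notin> P then Q w else 0) ((if fst (ends e) = u then {#snd (ends e)#} else {#}) +
                 (if snd (ends e) = u then {#fst (ends e)#} else {#}))) =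
          (if e \<in> Fat (Eav E ends S) ends u then Q (oth ends u e) else 0)"
proof (cases "fst (ends e) = u")
  case True
  show ?thesis
  proof (cases "snd (ends e) = u")
    case True2: True
    then show ?thesis using True setps by (simp add: Fat_def)
  next
    case False
    then show ?thesis using True setps uS e by (auto simp: Fat_def Eav_def endpoints_def oth_def)
  qed
next
  case False
  show ?thesis
  proof (cases "snd (ends e) = u")
    case True
    then show ?thesis using False setps uS e by (auto simp: Fat_def Eav_def endpoints_def oth_def)
  next
    case False2: False
    then show ?thesis using False by (simp add: Fat_def endpoints_def)
  qed
qed

lemma filt:
  assumes "finite E"
  shows "(\<Sum>e\<in>E. if e \<in> Fat (Eav E ends S) ends u then Q (oth ends u e) else 0) =
    (\<Sum>e\<in>Fat (Eav E ends S) ends u. Q (oth ends u e))"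
proof -
  have "Fat (Eav E ends S) ends u \<subseteq> E" by (auto simp: Fat_def Eav_def)
  then have "Fat (Eav E ends S) ends u = E \<inter> Fat (Eav E ends S) ends u" by blast
  then show ?thesis using sum.inter_restrict[OF assms, of "\<lambda>e. Q (oth ends u e)" "Fat (Eav E ends S) ends u"]
    by simp
qed

definition valid :: "'v set \<Rightarrow> 'v list \<Rightarrow> bool" where
  "valid V ps \<longleftrightarrow> ps \<noteq> [] \<and> distinct ps \<and> set ps \<subseteq> V"

context
  fixes V :: "'v set" and E :: "'e set" and ends :: "'e \<Rightarrow> 'v \<times> 'v"
    and D :: "'v \<Rightarrow> nat" and N :: "'v \<Rightarrow> nat \<Rightarrow> 'v" and lam :: real and \<Delta> :: nat
  assumes G: "graph V E ends" and O: "oracle_rep V E ends D N" and lam: "lam > 0"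
    and deg: "\<forall>u\<in>V. D u \<le> \<Delta>"
begin

lemma finE: "finite E" using G by (simp add: graph_def)

lemma mset_eq: "u \<in> V \<Longrightarrow> mset (map (N u) [1..<Suc (D u)]) =
        (\<Sum>e\<in>E. (if fst (ends e) = u then {#snd (ends e)#} else {#}) +
                 (if snd (ends e) = u then {#fst (ends e)#} else {#}))"
  using O by (simp add: oracle_rep_def)

lemma N_in_V: assumes u: "u \<in> V" and i: "1 \<le> i" "i \<le> D u" shows "N u i \<in> V"
proof -
  have "i \<in> set [1..<Suc (D u)]" using i by auto
  then have "N u i \<in> set (map (N u) [1..<Suc (D u)])" unfolding set_map by (rule imageI)
  then have "N u i \<in># mset (map (N u) [1..<Suc (D u)])" by (simp only: set_mset_mset)
  then have "N u i \<in> (\<Union>e\<in>E. set_mset ((if fst (ends e) = u then {#snd (ends e)#} else {#}) +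
                 (if snd (ends e) = u then {#fst (ends e)#} else {#})))"
    using mset_eq[OF u] set_mset_sum[OF finE] by metis
  then obtain e where "e \<in> E" "N u i = snd (ends e) \<or> N u i = fst (ends e)"
    by (auto split: if_splits)
  then show ?thesis using G by (auto simp: graph_def)
qed

lemma valid_child: assumes "valid V ps" "1 \<le> i" "i \<le> D (last ps)" "N (last ps) i \<notin> set ps"
  shows "valid V (ps @ [N (last ps) i])"
proof -
  have "last ps \<in> V" using assms(1) by (auto simp: valid_def)
  then have "N (last ps) i \<in> V" using N_in_V assms by blast
  then show ?thesis using assms by (auto simp: valid_def)
qed

lemma slot_sum:
  assumes v: "valid V ps"
  shows "(\<Sum>i\<in>{1..D (last ps)}. if N (last ps) i \<notin> set ps then Q (N (last ps) i) else 0) =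
         (\<Sum>e\<in>Fat (Eav E ends (set (butlast ps))) ends (last ps). Q (oth ends (last ps) e))"
proof -
  let ?u = "last ps"
  let ?S = "set (butlast ps)"
  let ?h = "\<lambda>w. if w \<notin> set ps then Q w else 0"
  have u: "?u \<in> V" using v by (auto simp: valid_def)
  have uS: "?u \<notin> ?S" using v unfolding valid_def by (intro last_notin_butlast) auto
  have setps: "set ps = insert ?u ?S" using v unfolding valid_def by (intro set_butlast_last) auto
  have eq1: "sum_list (map ?h (map (N ?u) [1..<Suc (D ?u)])) = (\<Sum>i\<in>{1..<Suc (D ?u)}. ?h (N ?u i))"
    by (simp only: map_map interv_sum_list_conv_sum_set_nat set_upt comp_def)
  have eq2: "{1..<Suc (D ?u)} = {1..D ?u}" by auto
  have "(\<Sum>i\<in>{1..D ?u}. ?h (N ?u i)) = sum_list (map ?h (map (N ?u) [1..<Suc (D ?u)]))"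
    using eq1[unfolded eq2] by (rule sym)
  also have "\<dots> = sum_mset (image_mset ?h (mset (map (N ?u) [1..<Suc (D ?u)])))"
    by (simp only: mset_map[symmetric] sum_mset_sum_list)
  also have "\<dots> = (\<Sum>e\<in>E. sum_mset (image_mset ?h ((if fst (ends e) = ?u then {#snd (ends e)#} else {#}) +
                 (if snd (ends e) = ?u then {#fst (ends e)#} else {#}))))"
    unfolding mset_eq[OF u] by (rule summset_image_sum[OF finE])
  also have "\<dots> = (\<Sum>e\<in>E. if e \<in> Fat (Eav E ends ?S) ends ?u then Q (oth ends ?u e) else 0)"
  proof (rule sum.cong)
    fix e assume e: "e \<in> E"
    show "sum_mset (image_mset ?h ((if fst (ends e) = ?u then {#snd (ends e)#} else {#}) +
                 (if snd (ends e) = ?u then {#fst (ends e)#} else {#}))) =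
          (if e \<in> Fat (Eav E ends ?S) ends ?u then Q (oth ends ?u e) else 0)"
      by (rule pointwise[where Q=Q, OF e uS setps])
  qed simp
  also have "\<dots> = (\<Sum>e\<in>Fat (Eav E ends ?S) ends ?u. Q (oth ends ?u e))"
    by (rule filt[where Q=Q, OF finE])
  finally show ?thesis .
qed

lemma Pp_rec:
  assumes v: "valid V ps"
  shows "Pp E ends lam ps = 1 / (1 + lam * (\<Sum>i\<in>{1..D (last ps)}.
            if N (last ps) i \<notin> set ps then Pp E ends lam (ps @ [N (last ps) i]) else 0))"
proof -
  let ?u = "last ps"
  let ?S = "set (butlast ps)"
  let ?F = "Eav E ends ?S"
  have setps: "set ps = insert ?u ?S" using v unfolding valid_def by (intro set_butlast_last) auto
  have fF: "finite ?F" using finE by (simp add: Eav_finite)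
  have eqF: "Eav ?F ends {?u} = Eav E ends (set ps)"
    unfolding Eav_Eav setps by (simp add: insert_commute)
  have "Pp E ends lam ps = 1 / (1 + lam * (\<Sum>e\<in>Fat ?F ends ?u. p_marg (Eav ?F ends {?u}) ends lam (oth ends ?u e)))"
    unfolding Pp_def by (rule p_rec[OF fF lam])
  also have "(\<Sum>e\<in>Fat ?F ends ?u. p_marg (Eav ?F ends {?u}) ends lam (oth ends ?u e)) =
      (\<Sum>e\<in>Fat ?F ends ?u. Pp E ends lam (ps @ [oth ends ?u e]))"
    unfolding eqF Pp_def by simp
  also have "\<dots> = (\<Sum>i\<in>{1..D (last ps)}.
            if N (last ps) i \<notin> set ps then Pp E ends lam (ps @ [N (last ps) i]) else 0)"
    using slot_sum[OF v, of "\<lambda>w. Pp E ends lam (ps @ [w])"] by simp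
  finally show ?thesis .
qed

lemma gval_Pp:
  assumes "valid V ps"
  shows "gval lam D N (Pp E ends lam) r ps = Pp E ends lam ps"
  using assms
proof (induction r arbitrary: ps)
  case 0 then show ?case by simp
next
  case (Suc r)
  have "(\<Sum>i\<in>{1..D (last ps)}. if N (last ps) i \<notin> set ps then gval lam D N (Pp E ends lam) r (ps @ [N (last ps) i]) else 0)
      = (\<Sum>i\<in>{1..D (last ps)}. if N (last ps) i \<notin> set ps then Pp E ends lam (ps @ [N (last ps) i]) else 0)"
    using Suc.IH valid_child[OF Suc.prems] by (intro sum.cong) auto
  then show ?case using Pp_rec[OF Suc.prems] by simp
qed

lemma Pp_root: assumes "v \<in> V" shows "Pp E ends lam [v] = p_marg E ends lam v"
  by (simp add: Pp_def Eav_def)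

lemma gval_lower:
  assumes v: "valid V ps" and L: "\<And>ps. 0 \<le> L ps \<and> L ps \<le> 1"
  shows "1 / (1 + lam * \<Delta>) \<le> gval lam D N L (Suc r) ps"
proof -
  let ?s = "(\<Sum>i\<in>{1..D (last ps)}. if N (last ps) i \<notin> set ps then gval lam D N L r (ps @ [N (last ps) i]) else 0)"
  have s0: "?s \<ge> 0" using gval_range[where L=L, OF lam L] by (intro sum_nonneg) auto
  have "?s \<le> (\<Sum>i\<in>{1..D (last ps)}. 1)" using gval_range[where L=L, OF lam L] by (intro sum_mono) auto
  also have "\<dots> = D (last ps)" by simp
  also have "\<dots> \<le> \<Delta>"
  proof -
    have "last ps \<in> V" using v by (auto simp: valid_def)
    then show ?thesis using deg by simp
  qed
  finally have "?s \<le> \<Delta>" .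
  then have "1 / (1 + lam * \<Delta>) \<le> 1 / (1 + lam * ?s)"
    using s0 lam by (intro divide_left_mono) (auto simp: add_pos_nonneg mult_left_mono)
  then show ?thesis by simp
qed

lemma Pp_lower: assumes "valid V ps" shows "1 / (1 + lam * \<Delta>) \<le> Pp E ends lam ps"
proof -
  have L: "\<And>ps. 0 \<le> Pp E ends lam ps \<and> Pp E ends lam ps \<le> 1"
    using Pp_range[OF finE lam] less_imp_le by blast
  have "1 / (1 + lam * \<Delta>) \<le> gval lam D N (Pp E ends lam) (Suc 0) ps"
    by (rule gval_lower[OF assms L])
  then show ?thesis by (simp only: gval_Pp[OF assms])
qed

end

definition Rc :: "real \<Rightarrow> real \<Rightarrow> real" where
  "Rc lam Dr = (sqrt (lam * Dr + 1) - 1) / (sqrt (lam * Dr + 1) + 1)"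

lemma Rc_bounds: assumes "lam > 0" "Dr > 0" shows "0 < Rc lam Dr" "Rc lam Dr < 1"
proof -
  have "lam * Dr > 0" using assms by simp
  then have h: "sqrt (lam * Dr + 1) > 1" by simp
  have h1: "sqrt (lam * Dr + 1) - 1 > 0" "sqrt (lam * Dr + 1) + 1 > 0" using h by linarith+
  show "0 < Rc lam Dr" unfolding Rc_def using h1 by (rule divide_pos_pos)
  show "Rc lam Dr < 1" unfolding Rc_def using h1 by (subst divide_less_eq_1) auto
qed

lemma quad_ineq:
  fixes t K :: real
  assumes K: "K > 0" and t: "t \<ge> 0"
  shows "t - t^2 / K \<le> (sqrt (K + 1) - 1) / (sqrt (K + 1) + 1) * (1 + t)"
proof -
  define s where "s = sqrt (K + 1)"
  have s1: "s > 1" using K by (simp add: s_def)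
  have sK: "s^2 = K + 1" using K by (simp add: s_def)
  have key: "(t - t^2 / K) * (K * (s + 1)) \<le> (s - 1) * (1 + t) * K"
  proof -
    have "(s - 1) * (1 + t) * K - (t - t^2 / K) * (K * (s + 1))
        = (s - 1) * (1 + t) * K - (t * K - t^2) * (s + 1)"
      using K by (simp add: field_simps)
    also have "\<dots> = (s + 1) * (t - (s - 1))^2"
    proof -
      have K_eq: "K = s^2 - 1" using sK by simp
      show ?thesis unfolding K_eq by (simp add: algebra_simps power2_eq_square)
    qed
    finally have "(s - 1) * (1 + t) * K - (t - t^2 / K) * (K * (s + 1)) = (s + 1) * (t - (s - 1))^2" .
    moreover have "(s + 1) * (t - (s - 1))^2 \<ge> 0" using s1 by simp
    ultimately show ?thesis by linarith
  qed
  have pos: "K * (s + 1) > 0" using K s1 by simp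
  have "t - t^2 / K \<le> (s - 1) * (1 + t) * K / (K * (s + 1))"
    by (subst pos_le_divide_eq[OF pos]) (rule key)
  also have "\<dots> = (s - 1) / (s + 1) * (1 + t)"
  proof -
    have ne: "s + 1 \<noteq> 0" "K \<noteq> 0" using K s1 by auto
    then show ?thesis by (simp add: divide_simps)
  qed
  finally show ?thesis by (simp add: s_def)
qed

lemma key_ineq:
  fixes lam Dr :: real and A :: "'i set" and x :: "'i \<Rightarrow> real"
  assumes lam: "lam > 0" and fin: "finite A" and card: "real (card A) \<le> Dr" and Dr: "Dr > 0"
    and x: "\<And>i. i \<in> A \<Longrightarrow> 0 \<le> x i \<and> x i \<le> 1"
  shows "lam * (\<Sum>i\<in>A. x i * (1 - x i)) \<le> Rc lam Dr * (1 + lam * (\<Sum>i\<in>A. x i))"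
proof (cases "A = {}")
  case True then show ?thesis using Rc_bounds[OF lam Dr] by simp
next
  case False
  define s where "s = (\<Sum>i\<in>A. x i)"
  define q where "q = (\<Sum>i\<in>A. (x i)^2)"
  have cpos: "real (card A) > 0" using False fin by (simp add: card_gt_0_iff)
  have s0: "s \<ge> 0" unfolding s_def using x by (intro sum_nonneg) auto
  have cs: "s^2 \<le> q * real (card A)" unfolding s_def q_def by (rule sum_squared_le_sum_of_squares)
  have "s^2 / Dr \<le> s^2 / real (card A)" using cpos card by (intro divide_left_mono) auto
  also have "\<dots> \<le> q" using cs cpos by (simp add: divide_le_eq)
  finally have qge: "s^2 / Dr \<le> q" .
  have lhs: "(\<Sum>i\<in>A. x i * (1 - x i)) = s - q"
    unfolding s_def q_def by (simp add: algebra_simps power2_eq_square sum_subtractf)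
  have "lam * (s - q) \<le> lam * (s - s^2 / Dr)" using qge lam by (intro mult_left_mono) auto
  also have "\<dots> = lam * s - (lam * s)^2 / (lam * Dr)" using lam Dr by (simp add: field_simps power2_eq_square)
  also have "\<dots> \<le> Rc lam Dr * (1 + lam * s)"
    using quad_ineq[of "lam * Dr" "lam * s"] lam Dr s0 by (simp add: Rc_def)
  finally show ?thesis using lhs s_def by simp
qed


lemma two_step:
  fixes lam Dr \<delta> :: real and A :: "'i set" and B :: "'i \<Rightarrow> 'j set" and a b :: "'i \<Rightarrow> 'j \<Rightarrow> real"
  assumes lam: "lam > 0" and fin: "finite A" and finB: "\<And>i. i \<in> A \<Longrightarrow> finite (B i)"
    and card: "real (card A) \<le> Dr" and Dr: "Dr > 0" and dl: "\<delta> \<ge> 0"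
    and a: "\<And>i j. i \<in> A \<Longrightarrow> j \<in> B i \<Longrightarrow> 0 < a i j"
    and b: "\<And>i j. i \<in> A \<Longrightarrow> j \<in> B i \<Longrightarrow> 0 < b i j"
    and d: "\<And>i j. i \<in> A \<Longrightarrow> j \<in> B i \<Longrightarrow> \<bar>ln (a i j) - ln (b i j)\<bar> \<le> \<delta>"
  shows "\<bar>ln (1 / (1 + lam * (\<Sum>i\<in>A. 1 / (1 + lam * (\<Sum>j\<in>B i. a i j)))))
         - ln (1 / (1 + lam * (\<Sum>i\<in>A. 1 / (1 + lam * (\<Sum>j\<in>B i. b i j)))))\<bar> \<le> Rc lam Dr * \<delta>"
proof -
  define c where "c i j = ln (a i j)" for i j
  define dd where "dd i j = ln (b i j) - ln (a i j)" for i j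
  define S where "S \<tau> i = (\<Sum>j\<in>B i. exp (c i j + \<tau> * dd i j))" for \<tau> i
  define S' where "S' \<tau> i = (\<Sum>j\<in>B i. dd i j * exp (c i j + \<tau> * dd i j))" for \<tau> i
  define X where "X \<tau> i = 1 / (1 + lam * S \<tau> i)" for \<tau> i
  define G where "G \<tau> = 1 + lam * (\<Sum>i\<in>A. X \<tau> i)" for \<tau>
  define g where "g \<tau> = ln (G \<tau>)" for \<tau>
  define g' where "g' \<tau> = (lam * (\<Sum>i\<in>A. - (lam * S' \<tau> i) / (1 + lam * S \<tau> i)^2)) / G \<tau>" for \<tau>
  have S0: "S \<tau> i \<ge> 0" for \<tau> i unfolding S_def by (intro sum_nonneg) auto
  have den: "1 + lam * S \<tau> i > 0" for \<tau> i using S0[of \<tau> i] lam by (simp add: add_pos_nonneg)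
  have X01: "0 \<le> X \<tau> i \<and> X \<tau> i \<le> 1" for \<tau> i
    unfolding X_def using S0[of \<tau> i] lam den[of \<tau> i] by (auto simp: field_simps)
  have Gpos: "G \<tau> \<ge> 1" for \<tau> unfolding G_def using X01 lam by (simp add: sum_nonneg)
  have Sa: "S 0 i = (\<Sum>j\<in>B i. a i j)" if "i \<in> A" for i
    unfolding S_def c_def using a that by (intro sum.cong) auto
  have Sb: "S 1 i = (\<Sum>j\<in>B i. b i j)" if "i \<in> A" for i
    unfolding S_def c_def dd_def using a b that by (intro sum.cong) auto
  have G0: "G 0 = 1 + lam * (\<Sum>i\<in>A. 1 / (1 + lam * (\<Sum>j\<in>B i. a i j)))"
    unfolding G_def X_def using Sa by (simp cong: sum.cong)
  have G1: "G 1 = 1 + lam * (\<Sum>i\<in>A. 1 / (1 + lam * (\<Sum>j\<in>B i. b i j)))"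
    unfolding G_def X_def using Sb by (simp cong: sum.cong)
  have dS: "((\<lambda>\<tau>. S \<tau> i) has_real_derivative S' \<tau> i) (at \<tau>)" for \<tau> i
    unfolding S_def S'_def
    by (rule DERIV_sum) (auto intro!: derivative_eq_intros)
  have dX: "((\<lambda>\<tau>. X \<tau> i) has_real_derivative - (lam * S' \<tau> i) / (1 + lam * S \<tau> i)^2) (at \<tau>)" for \<tau> i
  proof -
    have "((\<lambda>\<tau>. 1 + lam * S \<tau> i) has_real_derivative lam * S' \<tau> i) (at \<tau>)"
      using dS[of i \<tau>] by (auto intro!: derivative_eq_intros)
    from DERIV_inverse_fun[OF this] have
      "((\<lambda>\<tau>. inverse (1 + lam * S \<tau> i)) has_real_derivative - (lam * S' \<tau> i * inverse ((1 + lam * S \<tau> i)^2))) (at \<tau>)"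
      using den[of \<tau> i] by (simp add: power2_eq_square)
    then show ?thesis unfolding X_def by (simp add: divide_inverse power2_eq_square)
  qed
  have dG: "(G has_real_derivative lam * (\<Sum>i\<in>A. - (lam * S' \<tau> i) / (1 + lam * S \<tau> i)^2)) (at \<tau>)" for \<tau>
  proof -
    have "((\<lambda>\<tau>. \<Sum>i\<in>A. X \<tau> i) has_real_derivative (\<Sum>i\<in>A. - (lam * S' \<tau> i) / (1 + lam * S \<tau> i)^2)) (at \<tau>)"
      by (rule DERIV_sum) (rule dX)
    from DERIV_add[OF DERIV_const DERIV_cmult[OF this, of lam], of 1]
    show ?thesis unfolding G_def by simp
  qed
  have dg: "(g has_real_derivative g' \<tau>) (at \<tau>)" for \<tau>
  proof -
    have "((\<lambda>\<tau>. ln (G \<tau>)) has_real_derivative (1 / G \<tau>) * (lam * (\<Sum>i\<in>A. - (lam * S' \<tau> i) / (1 + lam * S \<tau> i)^2))) (at \<tau>)"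
      by (rule DERIV_chain2[OF DERIV_ln_divide dG]) (use Gpos[of \<tau>] in simp)
    then show ?thesis unfolding g_def g'_def by simp
  qed
  obtain z where z: "g 1 - g 0 = (1 - 0) * g' z"
    using MVT2[of 0 1 g g'] dg by auto
  have bound: "\<bar>g' z\<bar> \<le> Rc lam Dr * \<delta>"
  proof -
    have S'b: "\<bar>S' z i\<bar> \<le> \<delta> * S z i" if "i \<in> A" for i
    proof -
      have "\<bar>S' z i\<bar> \<le> (\<Sum>j\<in>B i. \<bar>dd i j * exp (c i j + z * dd i j)\<bar>)"
        unfolding S'_def by (rule sum_abs)
      also have "\<dots> \<le> (\<Sum>j\<in>B i. \<delta> * exp (c i j + z * dd i j))"
      proof (rule sum_mono)
        fix j assume j: "j \<in> B i"
        have "\<bar>dd i j\<bar> \<le> \<delta>" using d[OF that j] unfolding dd_def by simp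
        then show "\<bar>dd i j * exp (c i j + z * dd i j)\<bar> \<le> \<delta> * exp (c i j + z * dd i j)"
          by (simp add: abs_mult mult_right_mono)
      qed
      also have "\<dots> = \<delta> * S z i" unfolding S_def by (simp add: sum_distrib_left)
      finally show ?thesis .
    qed
    have trm: "\<bar>- (lam * S' z i) / (1 + lam * S z i)^2\<bar> \<le> \<delta> * (X z i * (1 - X z i))" if "i \<in> A" for i
    proof -
      have "\<bar>- (lam * S' z i) / (1 + lam * S z i)^2\<bar> = lam * \<bar>S' z i\<bar> / (1 + lam * S z i)^2"
        using lam by (simp add: abs_mult)
      also have "\<dots> \<le> lam * (\<delta> * S z i) / (1 + lam * S z i)^2"
        using S'b[OF that] lam den[of z i] by (intro divide_right_mono mult_left_mono) auto
      also have "\<dots> = \<delta> * (X z i * (1 - X z i))"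
        unfolding X_def using den[of z i] by (simp add: field_simps power2_eq_square)
      finally show ?thesis .
    qed
    have "\<bar>lam * (\<Sum>i\<in>A. - (lam * S' z i) / (1 + lam * S z i)^2)\<bar>
        \<le> lam * (\<Sum>i\<in>A. \<bar>- (lam * S' z i) / (1 + lam * S z i)^2\<bar>)"
      unfolding abs_mult abs_of_pos[OF lam] by (rule mult_left_mono[OF sum_abs]) (use lam in simp)
    also have "\<dots> \<le> lam * (\<Sum>i\<in>A. \<delta> * (X z i * (1 - X z i)))"
      using lam trm by (intro mult_left_mono sum_mono) auto
    also have "\<dots> = \<delta> * (lam * (\<Sum>i\<in>A. X z i * (1 - X z i)))"
      by (simp add: sum_distrib_left algebra_simps)
    also have "\<dots> \<le> \<delta> * (Rc lam Dr * G z)"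
      using key_ineq[OF lam fin card Dr, of "X z"] X01 dl unfolding G_def
      by (intro mult_left_mono) auto
    finally have num: "\<bar>lam * (\<Sum>i\<in>A. - (lam * S' z i) / (1 + lam * S z i)^2)\<bar> \<le> \<delta> * (Rc lam Dr * G z)" .
    have "\<bar>g' z\<bar> = \<bar>lam * (\<Sum>i\<in>A. - (lam * S' z i) / (1 + lam * S z i)^2)\<bar> / G z"
      unfolding g'_def using Gpos[of z] by simp
    also have "\<dots> \<le> \<delta> * (Rc lam Dr * G z) / G z"
      using num Gpos[of z] by (intro divide_right_mono) auto
    also have "\<dots> = Rc lam Dr * \<delta>" using Gpos[of z] by simp
    finally show ?thesis .
  qed
  have "ln (1 / G 0) - ln (1 / G 1) = g 1 - g 0"
    unfolding g_def using Gpos by (simp add: ln_div)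
  then show ?thesis using z bound G0 G1 by simp
qed


lemma ln_bracket: fixes a b m :: real assumes "0 < m" "m \<le> a" "a \<le> 1" "m \<le> b" "b \<le> 1"
  shows "\<bar>ln a - ln b\<bar> \<le> - ln m"
proof -
  have "ln m \<le> ln a" "ln a \<le> 0" "ln m \<le> ln b" "ln b \<le> 0" using assms by auto
  then show ?thesis by linarith
qed

lemma ln_lip: fixes a b :: real assumes "0 < a" "a \<le> 1" "0 < b" "b \<le> 1"
  shows "\<bar>a - b\<bar> \<le> \<bar>ln a - ln b\<bar>"
proof -
  have main: "y - x \<le> ln y - ln x" if "0 < x" "x \<le> y" "y \<le> 1" for x y :: real
  proof -
    have "ln (x / y) \<le> x / y - 1" using that by (intro ln_le_minus_one) auto
    then have "1 - x / y \<le> ln y - ln x" using that by (simp add: ln_div)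
    moreover have "y - x \<le> 1 - x / y"
    proof -
      have "(y - x) * y \<le> (y - x)" using that by (simp add: mult_left_le)
      then have "y - x \<le> (y - x) / y" using that by (simp add: le_divide_eq)
      also have "\<dots> = 1 - x / y" using that by (simp add: field_simps)
      finally show ?thesis .
    qed
    ultimately show ?thesis by linarith
  qed
  show ?thesis
  proof (cases "a \<le> b")
    case True then show ?thesis using main[of a b] assms by auto
  next
    case False then show ?thesis using main[of b a] assms by auto
  qed
qed

lemma unfold2:
  "gval lam D N L (Suc (Suc r)) ps =
   1 / (1 + lam * (\<Sum>i\<in>{i\<in>{1..D (last ps)}. N (last ps) i \<notin> set ps}.
      1 / (1 + lam * (\<Sum>j\<in>{j\<in>{1..D (N (last ps) i)}. N (N (last ps) i) j \<notin> set (ps @ [N (last ps) i])}.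
         gval lam D N L r (ps @ [N (last ps) i, N (N (last ps) i) j])))))"
  by (simp only: gval.simps sum.inter_filter[OF finite_atLeastAtMost] last_snoc append_assoc append_Cons append_Nil)

lemma geo_sum: fixes b :: nat assumes "b \<ge> 2" shows "(\<Sum>h\<in>{1..H}. b ^ (h + 1)) \<le> b ^ (H + 2)"
proof (induction H)
  case 0 then show ?case by simp
next
  case (Suc H)
  have "(\<Sum>h\<in>{1..Suc H}. b ^ (h + 1)) = (\<Sum>h\<in>{1..H}. b ^ (h + 1)) + b ^ (H + 2)" by simp
  also have "\<dots> \<le> b ^ (H + 2) + b ^ (H + 2)" using Suc by simp
  also have "\<dots> \<le> b * b ^ (H + 2)" using assms by (metis mult_2 mult_le_mono1)
  finally show ?case by simp
qed

context
  fixes V :: "'v set" and E :: "'e set" and ends :: "'e \<Rightarrow> 'v \<times> 'v"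
    and D :: "'v \<Rightarrow> nat" and N :: "'v \<Rightarrow> nat \<Rightarrow> 'v" and lam :: real and \<Delta> :: nat
  assumes G: "graph V E ends" and O: "oracle_rep V E ends D N" and lam: "lam > 0"
    and deg: "\<forall>u\<in>V. D u \<le> \<Delta>"
begin

abbreviation "Dr \<equiv> real \<Delta> + 1"
abbreviation "RR \<equiv> Rc lam Dr"
abbreviation "MM \<equiv> ln (1 + lam * Dr)"

lemma RR_bounds: "0 < RR" "RR < 1" using Rc_bounds[OF lam, of Dr] by auto

lemma MM_ge: "ln (1 + lam * \<Delta>) \<le> MM" using lam by (simp add: add_pos_nonneg)

lemma contract:
  assumes L1: "\<And>ps. 0 < L1 ps \<and> L1 ps \<le> 1" and L2: "\<And>ps. 0 < L2 ps \<and> L2 ps \<le> 1"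
    and base: "\<And>ps. valid V ps \<Longrightarrow> \<bar>ln (L1 ps) - ln (L2 ps)\<bar> \<le> MM"
  shows "valid V ps \<Longrightarrow> \<bar>ln (gval lam D N L1 r ps) - ln (gval lam D N L2 r ps)\<bar> \<le> RR ^ (r div 2) * MM"
proof (induction r arbitrary: ps rule: less_induct)
  case (less r)
  have L1': "\<And>ps. 0 \<le> L1 ps \<and> L1 ps \<le> 1" using L1 less_imp_le by blast
  have L2': "\<And>ps. 0 \<le> L2 ps \<and> L2 ps \<le> 1" using L2 less_imp_le by blast
  show ?case
  proof (cases r)
    case 0 then show ?thesis using base[OF less.prems] by simp
  next
    case (Suc r1)
    show ?thesis
    proof (cases r1)
      case 0
      have m: "0 < 1 / (1 + lam * \<Delta>)" using lam by (simp add: add_pos_nonneg)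
      have a1: "1 / (1 + lam * \<Delta>) \<le> gval lam D N L1 (Suc 0) ps" by (rule gval_lower[OF G O lam deg less.prems L1'])
      have a2: "1 / (1 + lam * \<Delta>) \<le> gval lam D N L2 (Suc 0) ps" by (rule gval_lower[OF G O lam deg less.prems L2'])
      have b1: "gval lam D N L1 (Suc 0) ps \<le> 1"
        using gval_range[where L=L1 and r="Suc 0" and ps=ps and D=D and N=N, OF lam L1'] by simp
      have b2: "gval lam D N L2 (Suc 0) ps \<le> 1"
        using gval_range[where L=L2 and r="Suc 0" and ps=ps and D=D and N=N, OF lam L2'] by simp
      have "\<bar>ln (gval lam D N L1 (Suc 0) ps) - ln (gval lam D N L2 (Suc 0) ps)\<bar> \<le> - ln (1 / (1 + lam * \<Delta>))"
        by (rule ln_bracket[OF m a1 b1 a2 b2])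
      also have "\<dots> = ln (1 + lam * \<Delta>)" using lam by (simp add: ln_div add_pos_nonneg)
      also have "\<dots> \<le> MM" by (rule MM_ge)
      finally show ?thesis using Suc 0 by simp
    next
      case (Suc r2)
      let ?u = "last ps"
      let ?A = "{i\<in>{1..D ?u}. N ?u i \<notin> set ps}"
      let ?B = "\<lambda>i. {j\<in>{1..D (N ?u i)}. N (N ?u i) j \<notin> set (ps @ [N ?u i])}"
      let ?a = "\<lambda>i j. gval lam D N L1 r2 (ps @ [N ?u i, N (N ?u i) j])"
      let ?b = "\<lambda>i j. gval lam D N L2 r2 (ps @ [N ?u i, N (N ?u i) j])"
      have r: "r = Suc (Suc r2)" using Suc \<open>r = Suc r1\<close> by simp
      have uV: "?u \<in> V" using less.prems by (auto simp: valid_def)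
      have cardA: "real (card ?A) \<le> Dr"
      proof -
        have "card ?A \<le> card {1..D ?u}" by (intro card_mono) auto
        also have "\<dots> \<le> \<Delta>" using deg uV by simp
        finally show ?thesis by simp
      qed
      have valid2: "valid V (ps @ [N ?u i, N (N ?u i) j])" if i: "i \<in> ?A" and j: "j \<in> ?B i" for i j
      proof -
        have v1: "valid V (ps @ [N ?u i])" using valid_child[OF G O lam deg less.prems] i by auto
        have "valid V ((ps @ [N ?u i]) @ [N (last (ps @ [N ?u i])) j])"
          using valid_child[OF G O lam deg v1] j by auto
        then show ?thesis by simp
      qed
      have IH: "\<bar>ln (?a i j) - ln (?b i j)\<bar> \<le> RR ^ (r2 div 2) * MM" if "i \<in> ?A" "j \<in> ?B i" for i j
        using less.IH[of r2, OF _ valid2[OF that]] r by simp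
      have dl: "RR ^ (r2 div 2) * MM \<ge> 0"
        using RR_bounds lam by (intro mult_nonneg_nonneg) (auto simp: add_pos_nonneg)
      have "\<bar>ln (gval lam D N L1 (Suc (Suc r2)) ps) - ln (gval lam D N L2 (Suc (Suc r2)) ps)\<bar>
          \<le> RR * (RR ^ (r2 div 2) * MM)"
        unfolding unfold2
        by (rule two_step[OF lam _ _ cardA _ dl]) (use IH gval_pos[OF lam L1] gval_pos[OF lam L2] in auto)
      then show ?thesis using r by simp
    qed
  qed
qed

lemma P_props: "\<And>ps. 0 < Pp E ends lam ps \<and> Pp E ends lam ps \<le> 1"
  using Pp_range[OF finE[OF G O lam deg] lam] by blast

lemma err_bound:
  assumes v: "v \<in> V"
  shows "\<bar>ln (xval lam D N h [v]) - ln (p_marg E ends lam v)\<bar> \<le> RR ^ (h div 2) * MM"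
proof -
  have vv: "valid V [v]" using v by (simp add: valid_def)
  have base: "\<bar>ln 1 - ln (Pp E ends lam ps)\<bar> \<le> MM" if "valid V ps" for ps
  proof -
    have m: "0 < 1 / (1 + lam * \<Delta>)" using lam by (simp add: add_pos_nonneg)
    have "\<bar>ln 1 - ln (Pp E ends lam ps)\<bar> \<le> - ln (1 / (1 + lam * \<Delta>))"
      using Pp_lower[OF G O lam deg that] P_props inv_bounds(2)[OF lam, of "real \<Delta>"] by (intro ln_bracket[OF m]) auto
    also have "\<dots> = ln (1 + lam * \<Delta>)" using lam by (simp add: ln_div add_pos_nonneg)
    finally show ?thesis using MM_ge by linarith
  qed
  have "\<bar>ln (gval lam D N (\<lambda>_. 1) h [v]) - ln (gval lam D N (Pp E ends lam) h [v])\<bar> \<le> RR ^ (h div 2) * MM"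
    by (rule contract[OF _ P_props base vv]) simp
  then show ?thesis
    unfolding xval_gval1[symmetric] gval_Pp[OF G O lam deg vv] Pp_root[OF G O lam deg v] .
qed

lemma sandwich:
  assumes v: "v \<in> V" and h: "h \<ge> 1"
  shows "\<bar>ln (xval lam D N h [v]) - ln (p_marg E ends lam v)\<bar> \<le>
         \<bar>ln (xval lam D N h [v]) - ln (xval lam D N (h - 1) [v])\<bar>"
proof -
  have vv: "valid V [v]" using v by (simp add: valid_def)
  let ?P = "Pp E ends lam"
  have P': "\<And>ps. 0 \<le> ?P ps \<and> ?P ps \<le> 1" using P_props less_imp_le by blast
  have p: "p_marg E ends lam v = gval lam D N ?P h [v]"
    using gval_Pp[OF G O lam deg vv] Pp_root[OF G O lam deg v] by simp
  have x1: "xval lam D N h [v] = gval lam D N (\<lambda>_. 1) h [v]" by (rule xval_gval1)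
  have x0: "xval lam D N (h - 1) [v] = gval lam D N (\<lambda>_. 0) h [v]"
    using xval_gval0[of lam D N "h - 1" "[v]"] h by simp
  have m1: "(even h \<longrightarrow> gval lam D N (\<lambda>_. 0) h [v] \<le> gval lam D N ?P h [v]) \<and>
         (odd h \<longrightarrow> gval lam D N ?P h [v] \<le> gval lam D N (\<lambda>_. 0) h [v])"
    by (rule gval_mono[OF lam _ P']) (use P' in auto)
  have m2: "(even h \<longrightarrow> gval lam D N ?P h [v] \<le> gval lam D N (\<lambda>_. 1) h [v]) \<and>
         (odd h \<longrightarrow> gval lam D N (\<lambda>_. 1) h [v] \<le> gval lam D N ?P h [v])"
    by (rule gval_mono[OF lam P']) (use P' in auto)
  have pos0: "gval lam D N (\<lambda>_. 0) h [v] > 0" using gval_range[of lam "\<lambda>_. 0" D N h "[v]"] lam h by simp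
  have posP: "gval lam D N ?P h [v] > 0" using gval_pos[OF lam P_props] .
  have pos1: "gval lam D N (\<lambda>_. 1) h [v] > 0" using gval_pos[of lam "\<lambda>_. 1"] lam by simp
  show ?thesis
    unfolding p x1 x0
  proof (cases "even h")
    case True
    then show "\<bar>ln (gval lam D N (\<lambda>_. 1) h [v]) - ln (gval lam D N ?P h [v])\<bar> \<le>
      \<bar>ln (gval lam D N (\<lambda>_. 1) h [v]) - ln (gval lam D N (\<lambda>_. 0) h [v])\<bar>"
      using m1 m2 pos0 posP pos1 ln_le_cancel_iff by (smt (verit))
  next
    case False
    then show "\<bar>ln (gval lam D N (\<lambda>_. 1) h [v]) - ln (gval lam D N ?P h [v])\<bar> \<le>
      \<bar>ln (gval lam D N (\<lambda>_. 1) h [v]) - ln (gval lam D N (\<lambda>_. 0) h [v])\<bar>"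
      using m1 m2 pos0 posP pos1 ln_le_cancel_iff by (smt (verit))
  qed
qed

lemma xval_pos: "xval lam D N h ps > 0"
  unfolding xval_gval1 using gval_pos[of lam "\<lambda>_. 1" D N h ps] lam by simp

lemma xval_le1: "xval lam D N h ps \<le> 1"
  unfolding xval_gval1 using gval_range[of lam "\<lambda>_. 1" D N h ps] lam by simp

lemma stop_ok:
  assumes v: "v \<in> V" and h: "h \<ge> 2" and small: "2 * RR ^ ((h - 1) div 2) * MM \<le> eps / exp 1"
  shows "2 \<le> h \<and> \<bar>ln (xval lam D N h [v]) - ln (xval lam D N (h - 1) [v])\<bar> \<le> eps / exp 1"
proof -
  have M0: "MM \<ge> 0" using lam by (simp add: add_pos_nonneg)
  have e1: "\<bar>ln (xval lam D N h [v]) - ln (p_marg E ends lam v)\<bar> \<le> RR ^ ((h - 1) div 2) * MM"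
  proof -
    have "RR ^ (h div 2) \<le> RR ^ ((h - 1) div 2)"
      using RR_bounds by (intro power_decreasing) (auto simp: div_le_mono)
    then show ?thesis using err_bound[OF v, of h] M0 by (meson mult_right_mono order_trans)
  qed
  have e2: "\<bar>ln (xval lam D N (h - 1) [v]) - ln (p_marg E ends lam v)\<bar> \<le> RR ^ ((h - 1) div 2) * MM"
    using err_bound[OF v, of "h - 1"] .
  show ?thesis using e1 e2 small h by linarith
qed

lemma correctness:
  assumes v: "v \<in> V" and eps: "eps > 0" and ex: "\<exists>h. 2 \<le> h \<and> \<bar>ln (xval lam D N h [v]) - ln (xval lam D N (h - 1) [v])\<bar> \<le> eps / exp 1"
  shows "\<bar>approx_marginal lam eps D N v - p_marg E ends lam v\<bar> < eps
       \<and> \<bar>ln (approx_marginal lam eps D N v) - ln (p_marg E ends lam v)\<bar> < eps"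
proof -
  let ?h = "am_stop lam eps D N v"
  have hs: "2 \<le> ?h \<and> \<bar>ln (xval lam D N ?h [v]) - ln (xval lam D N (?h - 1) [v])\<bar> \<le> eps / exp 1"
    unfolding am_stop_def using ex by (rule LeastI_ex)
  have "\<bar>ln (xval lam D N ?h [v]) - ln (p_marg E ends lam v)\<bar> \<le> eps / exp 1"
    using sandwich[OF v, of ?h] hs by linarith
  also have "eps / exp 1 < eps" using eps by (simp add: divide_less_eq exp_gt_one[of 1] less_mult_imp_div_less)
  finally have l: "\<bar>ln (approx_marginal lam eps D N v) - ln (p_marg E ends lam v)\<bar> < eps"
    unfolding approx_marginal_def .
  have pr: "0 < p_marg E ends lam v \<and> p_marg E ends lam v \<le> 1"
    using P_props[of "[v]"] Pp_root[OF G O lam deg v] by simp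
  have "\<bar>approx_marginal lam eps D N v - p_marg E ends lam v\<bar> \<le> \<bar>ln (approx_marginal lam eps D N v) - ln (p_marg E ends lam v)\<bar>"
    unfolding approx_marginal_def using xval_pos xval_le1 pr by (intro ln_lip) auto
  then show ?thesis using l by linarith
qed

lemma dfs_bound: "valid V ps \<Longrightarrow> dfs_queries D N r ps \<le> (\<Delta> + 1) ^ (r + 1)"
proof (induction r arbitrary: ps)
  case 0 then show ?case by simp
next
  case (Suc r)
  let ?u = "last ps"
  have uV: "?u \<in> V" using Suc.prems by (auto simp: valid_def)
  have "(\<Sum>i\<in>{1..D ?u}. 1 + (if N ?u i \<notin> set ps then dfs_queries D N r (ps @ [N ?u i]) else 0))
      \<le> (\<Sum>i\<in>{1..D ?u}. 1 + (\<Delta> + 1) ^ (r + 1))"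
    using Suc.IH valid_child[OF G O lam deg Suc.prems] by (intro sum_mono) auto
  also have "\<dots> = D ?u * (1 + (\<Delta> + 1) ^ (r + 1))" by simp
  also have "\<dots> \<le> \<Delta> * (1 + (\<Delta> + 1) ^ (r + 1))" by (intro mult_le_mono1) (use deg uV in auto)
  finally have s: "(\<Sum>i\<in>{1..D ?u}. 1 + (if N ?u i \<notin> set ps then dfs_queries D N r (ps @ [N ?u i]) else 0))
      \<le> \<Delta> * (1 + (\<Delta> + 1) ^ (r + 1))" .
  have pw: "\<Delta> + 1 \<le> (\<Delta> + 1) ^ (r + 1)"
  proof -
    have "1 \<le> (\<Delta> + 1) ^ r" by simp
    then have "(\<Delta> + 1) * 1 \<le> (\<Delta> + 1) * (\<Delta> + 1) ^ r" by (rule mult_le_mono2)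
    then show ?thesis by simp
  qed
  have "1 + \<Delta> * (1 + (\<Delta> + 1) ^ (r + 1)) \<le> (\<Delta> + 1) ^ (Suc r + 1)"
  proof -
    have "(\<Delta> + 1) ^ (Suc r + 1) = \<Delta> * (\<Delta> + 1) ^ (r + 1) + (\<Delta> + 1) ^ (r + 1)" by (simp add: algebra_simps)
    then show ?thesis using pw by (simp add: algebra_simps)
  qed
  then show ?case using s by simp
qed

lemma queries_bound:
  assumes v: "v \<in> V"
  shows "am_queries lam eps D N v \<le> (\<Delta> + 2) ^ (am_stop lam eps D N v + 2)"
proof -
  have vv: "valid V [v]" using v by (simp add: valid_def)
  have "am_queries lam eps D N v \<le> (\<Sum>h\<in>{1..am_stop lam eps D N v}. (\<Delta> + 2) ^ (h + 1))"
    unfolding am_queries_def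
  proof (rule sum_mono)
    fix h show "dfs_queries D N h [v] \<le> (\<Delta> + 2) ^ (h + 1)"
      using dfs_bound[OF vv, of h] power_mono[of "\<Delta> + 1" "\<Delta> + 2" "h + 1"] by linarith
  qed
  also have "\<dots> \<le> (\<Delta> + 2) ^ (am_stop lam eps D N v + 2)" by (rule geo_sum) simp
  finally show ?thesis .
qed

end

definition aa :: "real \<Rightarrow> nat \<Rightarrow> real" where "aa lam \<Delta> = - ln (Rc lam (real \<Delta> + 1))"
definition MMf :: "real \<Rightarrow> nat \<Rightarrow> real" where "MMf lam \<Delta> = ln (1 + lam * (real \<Delta> + 1))"
definition Hr :: "real \<Rightarrow> real \<Rightarrow> nat \<Rightarrow> real" where
  "Hr lam \<epsilon> \<Delta> = 3 + 2 * max 0 (ln (2 * exp 1 * MMf lam \<Delta> / \<epsilon>)) / aa lam \<Delta>"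
definition Qb :: "real \<Rightarrow> real \<Rightarrow> nat \<Rightarrow> real" where
  "Qb lam \<epsilon> \<Delta> = (real \<Delta> + 2) powr (Hr lam \<epsilon> \<Delta> + 2)"

lemma aa_pos: "lam > 0 \<Longrightarrow> aa lam \<Delta> > 0"
  using Rc_bounds[of lam "real \<Delta> + 1"] by (simp add: aa_def)

lemma MM_pos: "lam > 0 \<Longrightarrow> MMf lam \<Delta> > 0"
  by (simp add: MMf_def add_pos_nonneg)

lemma small_lemma:
  fixes R M eps Y :: real and k :: nat
  assumes R: "0 < R" "R < 1" and M: "M > 0" and eps: "eps > 0"
    and Y: "Y = 2 * max 0 (ln (2 * exp 1 * M / eps)) / (- ln R)" and k: "real k \<ge> Y / 2"
  shows "2 * R ^ k * M \<le> eps / exp 1"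
proof -
  let ?a = "- ln R"
  have a: "?a > 0" using R by simp
  have Rk: "R ^ k = exp (- ?a * real k)"
    using R by (simp add: powr_realpow[symmetric] powr_def)
  have "- ?a * real k \<le> - ?a * (Y / 2)" using a k by simp
  also have "\<dots> = - max 0 (ln (2 * exp 1 * M / eps))" using a Y by simp
  also have "\<dots> \<le> - ln (2 * exp 1 * M / eps)" by simp
  finally have "R ^ k \<le> exp (- ln (2 * exp 1 * M / eps))" unfolding Rk by simp
  also have "\<dots> = eps / (2 * exp 1 * M)"
  proof -
    have p: "2 * exp 1 * M / eps > 0" using M eps by simp
    show ?thesis unfolding exp_minus exp_ln[OF p] by simp
  qed
  finally have rk: "R ^ k \<le> eps / (2 * exp 1 * M)" .
  have "2 * R ^ k * M \<le> 2 * (eps / (2 * exp 1 * M)) * M"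
    using rk M by (intro mult_right_mono mult_left_mono) auto
  also have "\<dots> = eps / exp 1" using M by (simp add: field_simps)
  finally show ?thesis .
qed

lemma ceil_half: fixes Y :: real assumes "Y \<ge> 0"
  shows "real ((nat \<lceil>Y\<rceil> + 2 - 1) div 2) \<ge> Y / 2" and "real (nat \<lceil>Y\<rceil> + 2) \<le> 3 + Y"
proof -
  let ?n = "nat \<lceil>Y\<rceil>"
  have "2 * ((?n + 1) div 2) \<ge> ?n" by linarith
  then have "real (2 * ((?n + 1) div 2)) \<ge> real ?n" by linarith
  moreover have "real ?n \<ge> Y" using assms by linarith
  ultimately show "real ((?n + 2 - 1) div 2) \<ge> Y / 2" by simp
  have "real ?n \<le> Y + 1" using assms by linarith
  then show "real (?n + 2) \<le> 3 + Y" by simp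
qed


lemma inv_aa_bound:
  assumes lam: "lam > 0" and D1: "real \<Delta> \<ge> 1"
  shows "1 / aa lam \<Delta> \<le> (sqrt (2 * lam + 1) + 1) / 2 * sqrt (real \<Delta>)"
proof -
  define s where "s = sqrt (lam * (real \<Delta> + 1) + 1)"
  have s1: "s > 1" using lam unfolding s_def by (simp add: add_pos_nonneg)
  let ?R = "Rc lam (real \<Delta> + 1)"
  have R: "0 < ?R" "?R < 1" using Rc_bounds[OF lam, of "real \<Delta> + 1"] by auto
  have Rs: "?R = (s - 1) / (s + 1)" by (simp add: Rc_def s_def)
  have "ln ?R \<le> ?R - 1" using R by (intro ln_le_minus_one) auto
  then have a1: "aa lam \<Delta> \<ge> 1 - ?R" by (simp add: aa_def)
  have oneR: "1 - ?R = 2 / (s + 1)" unfolding Rs using s1 by (simp add: field_simps)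
  have apos: "aa lam \<Delta> > 0" using aa_pos[OF lam] .
  have "1 / aa lam \<Delta> \<le> 1 / (2 / (s + 1))"
    using a1 oneR s1 apos by (intro divide_left_mono) auto
  also have "\<dots> = (s + 1) / 2" by simp
  also have "\<dots> \<le> (sqrt (2 * lam + 1) + 1) / 2 * sqrt (real \<Delta>)"
  proof -
    have e: "lam * 1 \<le> lam * real \<Delta>" using D1 lam by (intro mult_left_mono) auto
    have "lam * (real \<Delta> + 1) + 1 = lam * real \<Delta> + lam + 1" by (simp add: algebra_simps)
    moreover have "(2 * lam + 1) * real \<Delta> = 2 * (lam * real \<Delta>) + real \<Delta>" by (simp add: algebra_simps)
    ultimately have "lam * (real \<Delta> + 1) + 1 \<le> (2 * lam + 1) * real \<Delta>" using e D1 by linarith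
    then have "s \<le> sqrt ((2 * lam + 1) * real \<Delta>)" unfolding s_def by simp
    also have "\<dots> = sqrt (2 * lam + 1) * sqrt (real \<Delta>)" by (simp add: real_sqrt_mult)
    finally have sb: "s \<le> sqrt (2 * lam + 1) * sqrt (real \<Delta>)" .
    have "1 \<le> sqrt (real \<Delta>)" using D1 by simp
    moreover have eq: "(sqrt (2 * lam + 1) + 1) / 2 * sqrt (real \<Delta>) = (sqrt (2 * lam + 1) * sqrt (real \<Delta>) + sqrt (real \<Delta>)) / 2"
      by (simp add: field_simps)
    ultimately have "s + 1 \<le> sqrt (2 * lam + 1) * sqrt (real \<Delta>) + sqrt (real \<Delta>)" using sb by linarith
    then show ?thesis unfolding eq by (simp add: divide_right_mono)
  qed
  finally show ?thesis .
qed

lemma ln2_ge: "ln (2::real) \<ge> 1/2"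
proof -
  have "ln (1/2::real) \<le> 1/2 - 1" by (intro ln_le_minus_one) auto
  then show ?thesis by (simp add: ln_div)
qed

lemma part2:
  fixes lam :: real assumes lam: "lam > 0"
  shows "\<exists>C>0. \<forall>\<Delta>::nat. \<forall>\<epsilon>::real. 1 \<le> \<Delta> \<and> 0 < \<epsilon> \<and> \<epsilon> \<le> 1/2 \<longrightarrow>
         (let g = C * sqrt (real \<Delta>) * (1 + ln (real \<Delta>)) powr C;
              X = (1/\<epsilon>) powr g
          in Qb lam \<epsilon> \<Delta> \<le> C * X * (1 + ln X) powr C)"
proof -
  define c1 where "c1 = (sqrt (2 * lam + 1) + 1) / 2"
  define c2 where "c2 = 2 + ln (1 + 2 * lam)"
  define C0 where "C0 = 2 * (10 + 2 * c1 * (2 * c2 + 1))"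
  define C where "C = max 2 C0"
  have c1p: "c1 > 0"
  proof -
    have "0 \<le> sqrt (2 * lam + 1)" using lam by simp
    then have "0 < sqrt (2 * lam + 1) + 1" by linarith
    then show ?thesis unfolding c1_def by simp
  qed
  have c2g: "c2 \<ge> 1" unfolding c2_def using lam by simp
  have C2: "C \<ge> 2" unfolding C_def by simp
  show ?thesis
  proof (intro exI[of _ C] conjI allI impI)
    show "C > 0" using C2 by simp
    fix \<Delta> :: nat and \<epsilon> :: real
    assume h: "1 \<le> \<Delta> \<and> 0 < \<epsilon> \<and> \<epsilon> \<le> 1/2"
    then have D1: "real \<Delta> \<ge> 1" and e0: "\<epsilon> > 0" and e2: "\<epsilon> \<le> 1/2" by auto
    define q where "q = sqrt (real \<Delta>)"
    define w where "w = 1 + ln (real \<Delta>)"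
    define l where "l = ln (1 / \<epsilon>)"
    define M where "M = MMf lam \<Delta>"
    define m where "m = max 0 (ln (2 * exp 1 * M / \<epsilon>))"
    define g where "g = C * q * w powr C"
    define X where "X = (1 / \<epsilon>) powr g"
    have q1: "q \<ge> 1" using D1 by (simp add: q_def)
    have w1: "w \<ge> 1" using D1 by (simp add: w_def)
    have l2: "l \<ge> 1/2"
    proof -
      have "ln 2 \<le> ln (1 / \<epsilon>)" using e0 e2 by (simp add: field_simps)
      then show ?thesis using ln2_ge by (simp add: l_def)
    qed
    have Mp: "M > 0" using MM_pos[OF lam] by (simp add: M_def)
    have m0: "m \<ge> 0" by (simp add: m_def)
    have mb: "m \<le> c2 * w + l"
    proof -
      have "ln (2 * exp 1 * M / \<epsilon>) = ln 2 + 1 + ln M + l"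
        using Mp e0 by (simp add: l_def ln_div ln_mult)
      also have "\<dots> \<le> 1 + 1 + (M - 1) + l"
        using ln_le_minus_one[OF Mp] ln_2_less_1 by linarith
      also have "M \<le> ln (1 + 2 * lam) + ln (real \<Delta>)"
      proof -
        have e: "lam * 1 \<le> lam * real \<Delta>" using D1 lam by (intro mult_left_mono) auto
        have "1 + lam * (real \<Delta> + 1) = lam * real \<Delta> + lam + 1" by (simp add: algebra_simps)
        moreover have "(1 + 2 * lam) * real \<Delta> = 2 * (lam * real \<Delta>) + real \<Delta>" by (simp add: algebra_simps)
        ultimately have "1 + lam * (real \<Delta> + 1) \<le> (1 + 2 * lam) * real \<Delta>" using e D1 by linarith
        then have "ln (1 + lam * (real \<Delta> + 1)) \<le> ln ((1 + 2 * lam) * real \<Delta>)"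
          using lam D1 by (intro ln_mono) (auto simp: add_pos_nonneg)
        also have "\<dots> = ln (1 + 2 * lam) + ln (real \<Delta>)" using lam D1 by (simp add: ln_mult)
        finally show ?thesis by (simp add: M_def MMf_def)
      qed
      finally have "ln (2 * exp 1 * M / \<epsilon>) \<le> 1 + ln (1 + 2 * lam) + ln (real \<Delta>) + l" by simp
      moreover have "1 + ln (1 + 2 * lam) + ln (real \<Delta>) \<le> c2 * w"
      proof -
        have "ln (real \<Delta>) \<ge> 0" using D1 by simp
        then have "ln (real \<Delta>) \<le> c2 * ln (real \<Delta>)" using c2g by (simp add: mult_le_cancel_right1)
        then show ?thesis unfolding c2_def w_def by (simp add: algebra_simps)
      qed
      moreover have "0 \<le> c2 * w + l"
      proof -
        have "0 \<le> c2 * w" using c2g w1 by simp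
        then show ?thesis using l2 by linarith
      qed
      ultimately show ?thesis unfolding m_def by linarith
    qed
    have ia: "1 / aa lam \<Delta> \<le> c1 * q" using inv_aa_bound[OF lam D1] by (simp add: c1_def q_def)
    have ap: "aa lam \<Delta> > 0" by (rule aa_pos[OF lam])
    have lnD2: "ln (real \<Delta> + 2) \<le> 2 * w"
    proof -
      have "ln (real \<Delta> + 2) \<le> ln (3 * real \<Delta>)" using D1 by (intro ln_mono) auto
      also have "\<dots> = ln 3 + ln (real \<Delta>)" using D1 by (simp add: ln_mult)
      finally have x: "ln (real \<Delta> + 2) \<le> ln 3 + ln (real \<Delta>)" .
      have y: "ln (3::real) \<le> 2" using ln_le_minus_one[of "3::real"] by simp
      have z: "ln (real \<Delta>) \<ge> 0" using D1 by simp
      have "ln 3 + ln (real \<Delta>) \<le> 2 + ln (real \<Delta>)" using y by (rule add_right_mono)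
      also have "\<dots> \<le> 2 * (1 + ln (real \<Delta>))" using z by simp
      finally show ?thesis unfolding w_def using x by (rule order_trans[rotated])
    qed
    have lnD2p: "ln (real \<Delta> + 2) \<ge> 0" by simp
    have lnQ: "ln (Qb lam \<epsilon> \<Delta>) = (5 + 2 * m / aa lam \<Delta>) * ln (real \<Delta> + 2)"
      unfolding Qb_def Hr_def m_def M_def by (simp add: ln_powr)
    have F1: "2 * m / aa lam \<Delta> \<le> 2 * c1 * q * (c2 * w + l)"
    proof -
      have "2 * m / aa lam \<Delta> = 2 * m * (1 / aa lam \<Delta>)" by simp
      also have "\<dots> \<le> 2 * (c2 * w + l) * (c1 * q)"
        using m0 mb ia ap by (intro mult_mono) auto
      finally show ?thesis by (simp add: algebra_simps)
    qed
    have F2: "5 + 2 * c1 * q * (c2 * w + l) \<le> l * q * w * (10 + 2 * c1 * (2 * c2 + 1))"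
    proof -
      have qw: "1 * 1 \<le> q * w" using q1 w1 by (intro mult_mono) auto
      have "l * 1 \<le> l * (q * w)" using qw l2 by (intro mult_left_mono) auto
      then have a0: "l \<le> l * (q * w)" by simp
      have a: "5 \<le> 10 * l * (q * w)" using a0 l2 by linarith
      have cw: "0 \<le> c2 * w" using c2g w1 by simp
      have "(c2 * w) * 1 \<le> (c2 * w) * (2 * l)" using cw l2 by (intro mult_left_mono) auto
      then have b: "c2 * w \<le> 2 * c2 * w * l" by (simp add: algebra_simps)
      have c: "l \<le> l * w" using l2 w1 by (simp add: mult_le_cancel_left1)
      have "2 * c1 * q * (c2 * w + l) \<le> 2 * c1 * q * (2 * c2 * w * l + l * w)"
        using b c c1p q1 by (intro mult_left_mono) auto
      also have "\<dots> = l * q * w * (2 * c1 * (2 * c2 + 1))" by (simp add: algebra_simps)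
      finally show ?thesis using a by (simp add: algebra_simps)
    qed
    have lnQb: "ln (Qb lam \<epsilon> \<Delta>) \<le> l * g"
    proof -
      have A: "5 + 2 * m / aa lam \<Delta> \<le> l * q * w * (10 + 2 * c1 * (2 * c2 + 1))" using F1 F2 by linarith
      have A0: "0 \<le> 5 + 2 * m / aa lam \<Delta>" using m0 ap by simp
      have "ln (Qb lam \<epsilon> \<Delta>) \<le> (l * q * w * (10 + 2 * c1 * (2 * c2 + 1))) * (2 * w)"
        unfolding lnQ using A A0 lnD2 lnD2p by (intro mult_mono) auto
      also have "\<dots> = l * q * C0 * w^2" by (simp add: C0_def algebra_simps power2_eq_square)
      also have "\<dots> \<le> l * q * C * w powr C"
      proof -
        have "w^2 = w powr 2" using w1 by (simp add: powr_realpow)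
        also have "\<dots> \<le> w powr C" using w1 C2 by (intro powr_mono) auto
        finally have ww: "w^2 \<le> w powr C" .
        have "C0 \<le> C" by (simp add: C_def)
        moreover have "C0 \<ge> 0" using c1p c2g by (simp add: C0_def)
        ultimately show ?thesis using ww l2 q1 w1
          by (intro mult_mono mult_left_mono) auto
      qed
      finally show ?thesis by (simp add: g_def algebra_simps)
    qed
    have Qpos: "Qb lam \<epsilon> \<Delta> > 0" unfolding Qb_def by simp
    have lnX: "ln X = g * l" unfolding X_def l_def using e0 by (simp add: ln_powr)
    have Xpos: "X > 0" unfolding X_def using e0 by simp
    have QX: "Qb lam \<epsilon> \<Delta> \<le> X"
    proof -
      have "ln (Qb lam \<epsilon> \<Delta>) \<le> ln X" using lnQb lnX by (simp add: algebra_simps)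
      then show ?thesis using Qpos Xpos by simp
    qed
    have g0: "g \<ge> 0" unfolding g_def using C2 q1 w1 by simp
    have lnX0: "ln X \<ge> 0" using lnX g0 l2 by simp
    have "1 \<le> (1 + ln X) powr C" using lnX0 C2 by (intro ge_one_powr_ge_zero) auto
    then have "1 * 1 \<le> C * (1 + ln X) powr C" using C2 by (intro mult_mono) auto
    then have "X * 1 \<le> X * (C * (1 + ln X) powr C)" using Xpos by (intro mult_left_mono) auto
    then have "X \<le> C * X * (1 + ln X) powr C" by (simp add: algebra_simps)
    with QX have "Qb lam \<epsilon> \<Delta> \<le> C * X * (1 + ln X) powr C" by linarith
    then show "let g = C * sqrt (real \<Delta>) * (1 + ln (real \<Delta>)) powr C; X = (1/\<epsilon>) powr g
          in Qb lam \<epsilon> \<Delta> \<le> C * X * (1 + ln X) powr C"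
      by (simp add: Let_def X_def g_def q_def w_def)
  qed
qed


lemma lim_eps:
  fixes lam :: real assumes lam: "lam > 0"
  shows "((\<lambda>\<epsilon>. ln (Qb lam \<epsilon> \<Delta>) / ln (1/\<epsilon>)) \<longlongrightarrow> 2 * ln (real \<Delta> + 2) / aa lam \<Delta>) (at_right 0)"
proof -
  define M where "M = MMf lam \<Delta>"
  define a where "a = aa lam \<Delta>"
  define b where "b = ln (real \<Delta> + 2)"
  define K where "K = (5 + 2 * ln (2 * exp 1 * M) / a) * b"
  have Mp: "M > 0" using MM_pos[OF lam] by (simp add: M_def)
  have ap: "a > 0" using aa_pos[OF lam] by (simp add: a_def)
  have lnlim: "filterlim (\<lambda>x::real. ln (1/x)) at_top (at_right 0)" by real_asymp
  have "((\<lambda>\<epsilon>. K / ln (1/\<epsilon>)) \<longlongrightarrow> 0) (at_right 0)"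
    by (rule tendsto_divide_0[OF tendsto_const filterlim_at_top_imp_at_infinity[OF lnlim]])
  then have lim: "((\<lambda>\<epsilon>. K / ln (1/\<epsilon>) + 2 * b / a) \<longlongrightarrow> 0 + 2 * b / a) (at_right 0)"
    by (intro tendsto_add tendsto_const)
  have ev: "eventually (\<lambda>\<epsilon>. K / ln (1/\<epsilon>) + 2 * b / a = ln (Qb lam \<epsilon> \<Delta>) / ln (1/\<epsilon>)) (at_right 0)"
  proof -
    have pos: "0 < min 1 (2 * exp 1 * M)" using Mp by simp
    show ?thesis
    proof (rule eventually_at_rightI[OF _ pos])
      fix \<epsilon> assume e: "\<epsilon> \<in> {0<..<min 1 (2 * exp 1 * M)}"
      then have e0: "\<epsilon> > 0" and e1: "\<epsilon> < 1" and e2: "\<epsilon> < 2 * exp 1 * M" by auto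
      define l where "l = ln (1/\<epsilon>)"
      have lp: "l > 0" using e0 e1 by (simp add: l_def)
      have split: "ln (2 * exp 1 * M / \<epsilon>) = ln (2 * exp 1 * M) + l"
        using Mp e0 by (simp add: l_def ln_div)
      have "1 < 2 * exp 1 * M / \<epsilon>" using e0 e2 by (simp add: field_simps)
      then have gt: "ln (2 * exp 1 * M / \<epsilon>) > 0" by (rule ln_gt_zero)
      have "ln (Qb lam \<epsilon> \<Delta>) = (5 + 2 * (ln (2 * exp 1 * M) + l) / a) * b"
        unfolding Qb_def Hr_def using gt split by (simp add: ln_powr M_def a_def b_def)
      then have "ln (Qb lam \<epsilon> \<Delta>) / l = K / l + 2 * b / a"
        using lp ap unfolding K_def by (simp add: field_simps)
      then show "K / ln (1/\<epsilon>) + 2 * b / a = ln (Qb lam \<epsilon> \<Delta>) / ln (1/\<epsilon>)" by (simp add: l_def)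
    qed
  qed
  show ?thesis using tendsto_cong[OF ev] lim by (simp add: a_def b_def)
qed

lemma lim_Delta:
  fixes lam :: real assumes lam: "lam > 0"
  shows "((\<lambda>\<Delta>. (2 * ln (real \<Delta> + 2) / aa lam \<Delta>) / (sqrt (real \<Delta>) * ln (real \<Delta>))) \<longlongrightarrow> sqrt lam) sequentially"
proof -
  define f where "f x = sqrt x * ln (1 + 2 / (sqrt (x + 1) - 1))" for x :: real
  have flim: "(f \<longlongrightarrow> 2) at_top" unfolding f_def by real_asymp
  have xlim: "filterlim (\<lambda>n::nat. lam * (real n + 1)) at_top sequentially" using lam by real_asymp
  have fx: "((\<lambda>n. f (lam * (real n + 1))) \<longlongrightarrow> 2) sequentially"
    using filterlim_compose[OF flim xlim] by (simp add: comp_def)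
  have rlim: "((\<lambda>n::nat. real n / (lam * (real n + 1))) \<longlongrightarrow> inverse lam) sequentially" using lam by real_asymp
  have slim: "((\<lambda>n::nat. sqrt (real n / (lam * (real n + 1)))) \<longlongrightarrow> sqrt (inverse lam)) sequentially"
    by (rule tendsto_real_sqrt[OF rlim])
  have aeq: "sqrt (real n) * aa lam n = f (lam * (real n + 1)) * sqrt (real n / (lam * (real n + 1)))" for n :: nat
  proof -
    define x where "x = lam * (real n + 1)"
    have xp: "x > 0" using lam by (simp add: x_def add_pos_nonneg)
    define s where "s = sqrt (x + 1)"
    have s1: "s > 1" using xp by (simp add: s_def)
    have "aa lam n = ln (1 + 2 / (s - 1))"
    proof -
      have R: "Rc lam (real n + 1) = (s - 1) / (s + 1)" by (simp add: Rc_def s_def x_def)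
      have "1 + 2 / (s - 1) = 1 / ((s - 1) / (s + 1))" using s1 by (simp add: field_simps)
      then show ?thesis unfolding aa_def R using s1 by (simp add: ln_div)
    qed
    moreover have "sqrt (real n) = sqrt x * sqrt (real n / x)"
      using xp by (simp add: real_sqrt_mult[symmetric])
    ultimately show ?thesis by (simp add: f_def s_def x_def algebra_simps)
  qed
  have T: "((\<lambda>n. sqrt (real n) * aa lam n) \<longlongrightarrow> 2 * sqrt (inverse lam)) sequentially"
    unfolding aeq by (intro tendsto_mult fx slim)
  have lnr: "((\<lambda>n::nat. ln (real n + 2) / ln (real n)) \<longlongrightarrow> 1) sequentially" by real_asymp
  have nz: "2 * sqrt (inverse lam) \<noteq> 0" using lam by simp
  have lim: "((\<lambda>n. 2 / (sqrt (real n) * aa lam n) * (ln (real n + 2) / ln (real n))) \<longlongrightarrow> 2 / (2 * sqrt (inverse lam)) * 1) sequentially"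
    by (intro tendsto_mult tendsto_divide tendsto_const T lnr nz)
  have val: "2 / (2 * sqrt (inverse lam)) * 1 = sqrt lam"
  proof -
    have sp: "sqrt lam > 0" using lam by simp
    have "sqrt (inverse lam) = inverse (sqrt lam)" by (rule real_sqrt_inverse)
    then show ?thesis using sp by (simp add: field_simps)
  qed
  have ev: "eventually (\<lambda>n. 2 / (sqrt (real n) * aa lam n) * (ln (real n + 2) / ln (real n)) =
      (2 * ln (real n + 2) / aa lam n) / (sqrt (real n) * ln (real n))) sequentially"
    by (rule always_eventually) (simp add: field_simps)
  show ?thesis using tendsto_cong[OF ev] lim val by simp
qed


lemma part1:
  fixes V :: "'v set" and E :: "'e set" and ends :: "'e \<Rightarrow> 'v \<times> 'v"
    and D :: "'v \<Rightarrow> nat" and N :: "'v \<Rightarrow> nat \<Rightarrow> 'v" and lam :: real and \<Delta> :: nat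
  assumes G: "graph V E ends" and O: "oracle_rep V E ends D N" and lam: "lam > 0"
    and deg: "\<forall>u\<in>V. D u \<le> \<Delta>" and v: "v \<in> V" and eps: "\<epsilon> > 0"
  shows "\<bar>approx_marginal lam \<epsilon> D N v - p_marg E ends lam v\<bar> < \<epsilon>
         \<and> \<bar>ln (approx_marginal lam \<epsilon> D N v) - ln (p_marg E ends lam v)\<bar> < \<epsilon>
         \<and> real (am_queries lam \<epsilon> D N v) \<le> Qb lam \<epsilon> \<Delta>"
proof -
  define Y where "Y = 2 * max 0 (ln (2 * exp 1 * MMf lam \<Delta> / \<epsilon>)) / aa lam \<Delta>"
  have ap: "aa lam \<Delta> > 0" by (rule aa_pos[OF lam])
  have Y0: "Y \<ge> 0" unfolding Y_def using ap by simp
  define h0 where "h0 = nat \<lceil>Y\<rceil> + 2"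
  have h02: "h0 \<ge> 2" by (simp add: h0_def)
  have k: "real ((h0 - 1) div 2) \<ge> Y / 2" unfolding h0_def by (rule ceil_half(1)[OF Y0])
  have h0Y: "real h0 \<le> 3 + Y" unfolding h0_def by (rule ceil_half(2)[OF Y0])
  have R: "0 < Rc lam (real \<Delta> + 1)" "Rc lam (real \<Delta> + 1) < 1" using Rc_bounds[OF lam, of "real \<Delta> + 1"] by auto
  have small: "2 * Rc lam (real \<Delta> + 1) ^ ((h0 - 1) div 2) * ln (1 + lam * (real \<Delta> + 1)) \<le> \<epsilon> / exp 1"
    using small_lemma[OF R MM_pos[OF lam, of \<Delta>] eps _ k] unfolding Y_def aa_def MMf_def by simp
  have stop: "2 \<le> h0 \<and> \<bar>ln (xval lam D N h0 [v]) - ln (xval lam D N (h0 - 1) [v])\<bar> \<le> \<epsilon> / exp 1"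
    by (rule stop_ok[OF G O lam deg v h02 small])
  have corr: "\<bar>approx_marginal lam \<epsilon> D N v - p_marg E ends lam v\<bar> < \<epsilon>
       \<and> \<bar>ln (approx_marginal lam \<epsilon> D N v) - ln (p_marg E ends lam v)\<bar> < \<epsilon>"
  proof -
    have ex: "\<exists>h. 2 \<le> h \<and> \<bar>ln (xval lam D N h [v]) - ln (xval lam D N (h - 1) [v])\<bar> \<le> \<epsilon> / exp 1"
      using stop by blast
    show ?thesis by (rule correctness[OF G O lam deg v eps ex])
  qed
  have st: "am_stop lam \<epsilon> D N v \<le> h0"
    unfolding am_stop_def by (rule Least_le) (rule stop)
  have "real (am_queries lam \<epsilon> D N v) \<le> real ((\<Delta> + 2) ^ (am_stop lam \<epsilon> D N v + 2))"
    using queries_bound[OF G O lam deg v, of \<epsilon>] by linarith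
  also have "\<dots> = (real \<Delta> + 2) powr real (am_stop lam \<epsilon> D N v + 2)"
  proof -
    have aux: "real ((\<Delta> + 2) ^ n) = (real \<Delta> + 2) powr real n" for n :: nat
      by (simp add: powr_realpow add.commute)
    show ?thesis by (rule aux)
  qed
  also have "\<dots> \<le> (real \<Delta> + 2) powr (Hr lam \<epsilon> \<Delta> + 2)"
  proof (rule powr_mono)
    have "real (am_stop lam \<epsilon> D N v) \<le> real h0" using st by simp
    then show "real (am_stop lam \<epsilon> D N v + 2) \<le> Hr lam \<epsilon> \<Delta> + 2"
      using h0Y unfolding Hr_def Y_def by simp
  qed simp
  finally show ?thesis using corr unfolding Qb_def by simp
qed

theorem proposition1:
  fixes lam :: real
  assumes "lam > 0"
  shows "\<exists>Qbar :: real \<Rightarrow> nat \<Rightarrow> real.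
    (\<forall>(V::nat set) (E::nat set) (ends::nat \<Rightarrow> nat \<times> nat) (D::nat \<Rightarrow> nat)
        (N::nat \<Rightarrow> nat \<Rightarrow> nat) (v::nat) (\<Delta>::nat) (\<epsilon>::real).
       graph V E ends \<and> oracle_rep V E ends D N \<and> (\<forall>u\<in>V. D u \<le> \<Delta>) \<and> v \<in> V \<and> \<epsilon> > 0
       \<longrightarrow> \<bar>approx_marginal lam \<epsilon> D N v - p_marg E ends lam v\<bar> < \<epsilon>
         \<and> \<bar>ln (approx_marginal lam \<epsilon> D N v) - ln (p_marg E ends lam v)\<bar> < \<epsilon>
         \<and> real (am_queries lam \<epsilon> D N v) \<le> Qbar \<epsilon> \<Delta>)
    \<and> (\<exists>C>0. \<forall>\<Delta>::nat. \<forall>\<epsilon>::real. 1 \<le> \<Delta> \<and> 0 < \<epsilon> \<and> \<epsilon> \<le> 1/2 \<longrightarrow>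
         (let g = C * sqrt (real \<Delta>) * (1 + ln (real \<Delta>)) powr C;
              X = (1/\<epsilon>) powr g
          in Qbar \<epsilon> \<Delta> \<le> C * X * (1 + ln X) powr C))
    \<and> (\<exists>L :: nat \<Rightarrow> real.
         (\<forall>\<Delta>. ((\<lambda>\<epsilon>. ln (Qbar \<epsilon> \<Delta>) / ln (1/\<epsilon>)) \<longlongrightarrow> L \<Delta>) (at_right 0))
       \<and> ((\<lambda>\<Delta>. L \<Delta> / (sqrt (real \<Delta>) * ln (real \<Delta>))) \<longlongrightarrow> sqrt lam) sequentially)"
proof (intro exI[of _ "Qb lam"] conjI)
  show "\<forall>(V::nat set) (E::nat set) (ends::nat \<Rightarrow> nat \<times> nat) (D::nat \<Rightarrow> nat)
        (N::nat \<Rightarrow> nat \<Rightarrow> nat) (v::nat) (\<Delta>::nat) (\<epsilon>::real).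
       graph V E ends \<and> oracle_rep V E ends D N \<and> (\<forall>u\<in>V. D u \<le> \<Delta>) \<and> v \<in> V \<and> \<epsilon> > 0
       \<longrightarrow> \<bar>approx_marginal lam \<epsilon> D N v - p_marg E ends lam v\<bar> < \<epsilon>
         \<and> \<bar>ln (approx_marginal lam \<epsilon> D N v) - ln (p_marg E ends lam v)\<bar> < \<epsilon>
         \<and> real (am_queries lam \<epsilon> D N v) \<le> Qb lam \<epsilon> \<Delta>"
    apply (intro allI impI)
    apply (elim conjE)
    apply (rule part1[OF _ _ assms])
    apply assumption+
    done
  show "\<exists>C>0. \<forall>\<Delta>::nat. \<forall>\<epsilon>::real. 1 \<le> \<Delta> \<and> 0 < \<epsilon> \<and> \<epsilon> \<le> 1/2 \<longrightarrow>
         (let g = C * sqrt (real \<Delta>) * (1 + ln (real \<Delta>)) powr C;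
              X = (1/\<epsilon>) powr g
          in Qb lam \<epsilon> \<Delta> \<le> C * X * (1 + ln X) powr C)"
    by (rule part2[OF assms])
  show "\<exists>L :: nat \<Rightarrow> real.
         (\<forall>\<Delta>. ((\<lambda>\<epsilon>. ln (Qb lam \<epsilon> \<Delta>) / ln (1/\<epsilon>)) \<longlongrightarrow> L \<Delta>) (at_right 0))
       \<and> ((\<lambda>\<Delta>. L \<Delta> / (sqrt (real \<Delta>) * ln (real \<Delta>))) \<longlongrightarrow> sqrt lam) sequentially"
    apply (rule exI[of _ "\<lambda>\<Delta>. 2 * ln (real \<Delta> + 2) / aa lam \<Delta>"])
    apply (rule conjI)
     apply (rule allI)
     apply (rule lim_eps[OF assms])
    apply (rule lim_Delta[OF assms])
    done
qed


end
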